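(* Let $X_{i,j}$, $1\le i\le K$, $1\le j\le n$, be i.i.d. random vectors in $\mathbb{R}^d$ with mean $\mu_0$, nonsingular covariance, and $\operatorname{E}\|X_{1,1}\|_2^\beta<\infty$ for some $\beta\ge4$, and let $K=O(N^{1-2/\beta})$ with $N=nK$. Let $\widehat\lambda^*=\arg\min_\lambda -\frac1N\sum_{i=1}^K\sum_{j=1}^n\log[1+\lambda^\top(X_{i,j}-\mu_0)]$. Then for any constant $C_1>0$, $$\sup_{\lambda\in\mathcal B(\widehat\lambda^*,C_1n^{-1/2})}\ \max_{1\le i\le K,\,1\le j\le n}|\lambda^\top(X_{i,j}-\mu_0)|=o_p(1)\quad\text{as }n\to\infty,$$ where $\mathcal B(\alpha,r)=\{\lambda\in\mathbb{R}^d:\|\lambda-\alpha\|_2\le r\}$.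
   Context: Data are split across $K$ machines with $n$ observations each; $X_{i,j}$ is the $j$-th observation on machine $i$. Asymptotics are as $n\to\infty$ with $K$ allowed to depend on $n$. *)

theory Defs
  imports "HOL-Probability.Probability" "HOL-Library.Landau_Symbols"
begin

text \<open>Covariance operator v \<mapsto> E[(v . (Y - mu)) (Y - mu)], i.e. the covariance matrix
  acting on v; it is nonsingular iff this linear map has trivial kernel.\<close>
definition cov_op :: "'a measure \<Rightarrow> ('a \<Rightarrow> 'b::euclidean_space) \<Rightarrow> 'b \<Rightarrow> 'b \<Rightarrow> 'b" where
  "cov_op M Y mu v = integral\<^sup>L M (\<lambda>\<omega>. (v \<bullet> (Y \<omega> - mu)) *\<^sub>R (Y \<omega> - mu))"

definition nonsingular_cov :: "'a measure \<Rightarrow> ('a \<Rightarrow> 'b::euclidean_space) \<Rightarrow> 'b \<Rightarrow> bool" where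
  "nonsingular_cov M Y mu \<longleftrightarrow> (\<forall>v. cov_op M Y mu v = 0 \<longrightarrow> v = 0)"

text \<open>Empirical-likelihood dual objective with K machines and n observations each
  (0-based indices i < K, j < n), N = n K.\<close>
definition el_dom :: "(nat \<Rightarrow> nat \<Rightarrow> 'a \<Rightarrow> 'b::euclidean_space) \<Rightarrow> 'b \<Rightarrow> nat \<Rightarrow> nat \<Rightarrow> 'a \<Rightarrow> 'b set" where
  "el_dom X mu K n \<omega> = {l. \<forall>i<K. \<forall>j<n. 1 + l \<bullet> (X i j \<omega> - mu) > 0}"

definition el_obj :: "(nat \<Rightarrow> nat \<Rightarrow> 'a \<Rightarrow> 'b::euclidean_space) \<Rightarrow> 'b \<Rightarrow> nat \<Rightarrow> nat \<Rightarrow> 'a \<Rightarrow> 'b \<Rightarrow> real" where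
  "el_obj X mu K n \<omega> l = - (1 / real (n * K)) * (\<Sum>i<K. \<Sum>j<n. ln (1 + l \<bullet> (X i j \<omega> - mu)))"

definition el_argmin :: "(nat \<Rightarrow> nat \<Rightarrow> 'a \<Rightarrow> 'b::euclidean_space) \<Rightarrow> 'b \<Rightarrow> nat \<Rightarrow> nat \<Rightarrow> 'a \<Rightarrow> 'b \<Rightarrow> bool" where
  "el_argmin X mu K n \<omega> l \<longleftrightarrow> l \<in> el_dom X mu K n \<omega> \<and>
     (\<forall>l'\<in>el_dom X mu K n \<omega>. el_obj X mu K n \<omega> l \<le> el_obj X mu K n \<omega> l')"

end

theory Submission
  imports Defs
begin

lemma transfer_int:
  assumes ident: "distr M borel (X i j) = distr M borel (X 0 0)"
    and meas: "\<And>i j. X i j \<in> borel_measurable M"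
    and f: "f \<in> borel_measurable (borel::'b::euclidean_space measure)"
  shows "integrable M (\<lambda>\<omega>. f (X i j \<omega>)) \<longleftrightarrow> integrable M (\<lambda>\<omega>. (f (X 0 0 \<omega>)::real))"
    and "integral\<^sup>L M (\<lambda>\<omega>. f (X i j \<omega>)) = integral\<^sup>L M (\<lambda>\<omega>. (f (X 0 0 \<omega>)::real))"
proof -
  have "integrable M (\<lambda>\<omega>. f (X i j \<omega>)) \<longleftrightarrow> integrable (distr M borel (X i j)) f"
    using meas f by (simp add: integrable_distr_eq)
  also have "\<dots> \<longleftrightarrow> integrable M (\<lambda>\<omega>. f (X 0 0 \<omega>))"
    unfolding ident using meas f by (simp add: integrable_distr_eq)
  finally show "integrable M (\<lambda>\<omega>. f (X i j \<omega>)) \<longleftrightarrow> integrable M (\<lambda>\<omega>. (f (X 0 0 \<omega>)::real))" .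
  have "integral\<^sup>L M (\<lambda>\<omega>. f (X i j \<omega>)) = integral\<^sup>L (distr M borel (X i j)) f"
    using meas f by (simp add: integral_distr)
  also have "\<dots> = integral\<^sup>L M (\<lambda>\<omega>. f (X 0 0 \<omega>))"
    unfolding ident using meas f by (simp add: integral_distr)
  finally show "integral\<^sup>L M (\<lambda>\<omega>. f (X i j \<omega>)) = integral\<^sup>L M (\<lambda>\<omega>. (f (X 0 0 \<omega>)::real))" .
qed

lemma transfer_prob:
  assumes ident: "distr M borel (X i j) = distr M borel (X 0 0)"
    and meas: "\<And>i j. X i j \<in> borel_measurable M"
    and A: "A \<in> sets (borel::'b::euclidean_space measure)"
  shows "measure M {\<omega>\<in>space M. X i j \<omega> \<in> A} = measure M {\<omega>\<in>space M. X 0 0 \<omega> \<in> A}"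
proof -
  have "measure M {\<omega>\<in>space M. X i j \<omega> \<in> A} = measure (distr M borel (X i j)) A"
    using meas A by (simp add: measure_distr vimage_def Int_def conj_commute)
  also have "\<dots> = measure M {\<omega>\<in>space M. X 0 0 \<omega> \<in> A}"
    unfolding ident using meas A by (simp add: measure_distr vimage_def Int_def conj_commute)
  finally show ?thesis .
qed

lemma sq_integrable_imp_integrable:
  assumes "prob_space M" "f \<in> borel_measurable M" "integrable M (\<lambda>\<omega>. (f \<omega>)\<^sup>2)"
  shows "integrable M (f :: _ \<Rightarrow> real)"
proof -
  interpret prob_space M by fact
  show ?thesis
  proof (rule Bochner_Integration.integrable_bound[of _ "\<lambda>\<omega>. 1 + (f \<omega>)\<^sup>2"])
    show "integrable M (\<lambda>\<omega>. 1 + (f \<omega>)\<^sup>2)" using assms(3) by auto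
    show "AE x in M. norm (f x) \<le> norm (1 + (f x)\<^sup>2)"
    proof (rule AE_I2)
      fix x
      have "0 \<le> (\<bar>f x\<bar> - 1)\<^sup>2" by simp
      then have "\<bar>f x\<bar> \<le> 1 + (f x)\<^sup>2"
        by (simp add: power2_eq_square algebra_simps abs_mult_self_eq)
      then show "norm (f x) \<le> norm (1 + (f x)\<^sup>2)" by simp
    qed
  qed (use assms in auto)
qed

lemma sum_sq_indep:
  fixes X :: "nat \<Rightarrow> nat \<Rightarrow> 'a \<Rightarrow> 'b::euclidean_space" and g :: "'b \<Rightarrow> real"
  assumes P: "prob_space M"
    and meas: "\<And>i j. X i j \<in> borel_measurable M"
    and indep: "prob_space.indep_vars M (\<lambda>_. borel) (\<lambda>(i, j). X i j) UNIV"
    and ident: "\<And>i j. distr M borel (X i j) = distr M borel (X 0 0)"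
    and g: "g \<in> borel_measurable borel"
    and int2: "integrable M (\<lambda>\<omega>. (g (X 0 0 \<omega>))\<^sup>2)"
    and mean0: "integral\<^sup>L M (\<lambda>\<omega>. g (X 0 0 \<omega>)) = 0"
    and fin: "finite I"
  shows "integrable M (\<lambda>\<omega>. (\<Sum>k\<in>I. g (X (fst k) (snd k) \<omega>))\<^sup>2)"
    and "integral\<^sup>L M (\<lambda>\<omega>. (\<Sum>k\<in>I. g (X (fst k) (snd k) \<omega>))\<^sup>2) = card I * integral\<^sup>L M (\<lambda>\<omega>. (g (X 0 0 \<omega>))\<^sup>2)"
proof -
  interpret prob_space M by fact
  define Y where "Y k \<omega> = g (X (fst k) (snd k) \<omega>)" for k \<omega>
  have Ymeas[measurable]: "Y k \<in> borel_measurable M" for k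
    unfolding Y_def using meas g by measurable
  have Y2: "integrable M (\<lambda>\<omega>. (Y k \<omega>)\<^sup>2)" for k
    using transfer_int(1)[where X=X and M=M, OF ident meas, of "\<lambda>x. (g x)\<^sup>2" "fst k" "snd k"] int2 g unfolding Y_def by auto
  have Y2i: "integral\<^sup>L M (\<lambda>\<omega>. (Y k \<omega>)\<^sup>2) = integral\<^sup>L M (\<lambda>\<omega>. (g (X 0 0 \<omega>))\<^sup>2)" for k
    using transfer_int(2)[where X=X and M=M, OF ident meas, of "\<lambda>x. (g x)\<^sup>2" "fst k" "snd k"] g unfolding Y_def by auto
  have Y1: "integrable M (Y k)" for k
    by (rule sq_integrable_imp_integrable[OF P Ymeas Y2])
  have Y1i: "integral\<^sup>L M (Y k) = 0" for k
  proof -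
    have i0: "integrable M (\<lambda>\<omega>. g (X 0 0 \<omega>))"
      by (rule sq_integrable_imp_integrable[OF P _ int2]) (use meas g in measurable)
    show ?thesis
      using transfer_int(2)[where X=X and M=M, OF ident meas g, of "fst k" "snd k"] mean0 unfolding Y_def by auto
  qed
  have indY: "indep_vars (\<lambda>_. borel) Y UNIV"
  proof -
    have "indep_vars (\<lambda>_. borel) (\<lambda>k \<omega>. g ((\<lambda>(i, j). X i j) k \<omega>)) UNIV"
      by (rule indep_vars_compose2[OF indep]) (use g in auto)
    then show ?thesis unfolding Y_def by (simp add: case_prod_beta)
  qed
  have prod_int: "integrable M (\<lambda>\<omega>. Y k \<omega> * Y l \<omega>)" for k l
  proof (rule Bochner_Integration.integrable_bound[of _ "\<lambda>\<omega>. (Y k \<omega>)\<^sup>2 + (Y l \<omega>)\<^sup>2"])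
    show "integrable M (\<lambda>\<omega>. (Y k \<omega>)\<^sup>2 + (Y l \<omega>)\<^sup>2)" using Y2 by auto
    show "AE x in M. norm (Y k x * Y l x) \<le> norm ((Y k x)\<^sup>2 + (Y l x)\<^sup>2)"
    proof (rule AE_I2)
      fix x
      have "2 * \<bar>Y k x\<bar> * \<bar>Y l x\<bar> \<le> (Y k x)\<^sup>2 + (Y l x)\<^sup>2"
        using sum_squares_bound[of "\<bar>Y k x\<bar>" "\<bar>Y l x\<bar>"] by simp
      moreover have "0 \<le> \<bar>Y k x\<bar> * \<bar>Y l x\<bar>" by simp
      moreover have "norm (Y k x * Y l x) = \<bar>Y k x\<bar> * \<bar>Y l x\<bar>" by (simp add: abs_mult)
      moreover have "norm ((Y k x)\<^sup>2 + (Y l x)\<^sup>2) = (Y k x)\<^sup>2 + (Y l x)\<^sup>2" by simp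
      ultimately show "norm (Y k x * Y l x) \<le> norm ((Y k x)\<^sup>2 + (Y l x)\<^sup>2)"
        by linarith
    qed
  qed simp
  have cross: "integral\<^sup>L M (\<lambda>\<omega>. Y k \<omega> * Y l \<omega>) = 0" if "k \<noteq> l" for k l
  proof -
    have "indep_vars (\<lambda>_. borel) Y {k, l}"
      by (rule indep_vars_subset[OF indY]) auto
    then have "(\<integral>\<omega>. (\<Prod>i\<in>{k,l}. Y i \<omega>) \<partial>M) = (\<Prod>i\<in>{k,l}. \<integral>\<omega>. Y i \<omega> \<partial>M)"
      by (intro indep_vars_lebesgue_integral) (auto simp: Y1)
    then show ?thesis using that Y1i by simp
  qed
  have expand: "(\<Sum>k\<in>I. Y k \<omega>)\<^sup>2 = (\<Sum>k\<in>I. \<Sum>l\<in>I. Y k \<omega> * Y l \<omega>)" for \<omega>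
    by (simp add: power2_eq_square sum_product)
  show "integrable M (\<lambda>\<omega>. (\<Sum>k\<in>I. g (X (fst k) (snd k) \<omega>))\<^sup>2)"
    unfolding Y_def[symmetric] expand using prod_int by auto
  have "integral\<^sup>L M (\<lambda>\<omega>. (\<Sum>k\<in>I. Y k \<omega>)\<^sup>2) = (\<Sum>k\<in>I. \<Sum>l\<in>I. integral\<^sup>L M (\<lambda>\<omega>. Y k \<omega> * Y l \<omega>))"
    unfolding expand using prod_int by (simp add: Bochner_Integration.integral_sum)
  also have "\<dots> = (\<Sum>k\<in>I. integral\<^sup>L M (\<lambda>\<omega>. (Y k \<omega>)\<^sup>2))"
  proof (rule sum.cong[OF refl])
    fix k assume k: "k \<in> I"
    have "(\<Sum>l\<in>I. integral\<^sup>L M (\<lambda>\<omega>. Y k \<omega> * Y l \<omega>)) = integral\<^sup>L M (\<lambda>\<omega>. Y k \<omega> * Y k \<omega>)"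
    proof -
      have "(\<Sum>l\<in>I - {k}. integral\<^sup>L M (\<lambda>\<omega>. Y k \<omega> * Y l \<omega>)) = 0"
      proof (rule sum.neutral, rule ballI)
        fix l assume "l \<in> I - {k}"
        then have "k \<noteq> l" by auto
        then show "integral\<^sup>L M (\<lambda>\<omega>. Y k \<omega> * Y l \<omega>) = 0" by (rule cross)
      qed
      then show ?thesis by (subst sum.remove[OF fin k]) simp
    qed
    then show "(\<Sum>l\<in>I. integral\<^sup>L M (\<lambda>\<omega>. Y k \<omega> * Y l \<omega>)) = integral\<^sup>L M (\<lambda>\<omega>. (Y k \<omega>)\<^sup>2)"
      by (simp add: power2_eq_square)
  qed
  also have "\<dots> = card I * integral\<^sup>L M (\<lambda>\<omega>. (g (X 0 0 \<omega>))\<^sup>2)"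
    using Y2i by simp
  finally show "integral\<^sup>L M (\<lambda>\<omega>. (\<Sum>k\<in>I. g (X (fst k) (snd k) \<omega>))\<^sup>2) = card I * integral\<^sup>L M (\<lambda>\<omega>. (g (X 0 0 \<omega>))\<^sup>2)"
    unfolding Y_def .
qed

lemma cheb_sum:
  fixes X :: "nat \<Rightarrow> nat \<Rightarrow> 'a \<Rightarrow> 'b::euclidean_space" and g :: "'b \<Rightarrow> real"
  assumes P: "prob_space M"
    and meas: "\<And>i j. X i j \<in> borel_measurable M"
    and indep: "prob_space.indep_vars M (\<lambda>_. borel) (\<lambda>(i, j). X i j) UNIV"
    and ident: "\<And>i j. distr M borel (X i j) = distr M borel (X 0 0)"
    and g: "g \<in> borel_measurable borel"
    and int2: "integrable M (\<lambda>\<omega>. (g (X 0 0 \<omega>))\<^sup>2)"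
    and mean0: "integral\<^sup>L M (\<lambda>\<omega>. g (X 0 0 \<omega>)) = 0"
    and fin: "finite I" and t: "t > 0"
  shows "measure M {\<omega>\<in>space M. t \<le> \<bar>\<Sum>k\<in>I. g (X (fst k) (snd k) \<omega>)\<bar>}
           \<le> card I * integral\<^sup>L M (\<lambda>\<omega>. (g (X 0 0 \<omega>))\<^sup>2) / t\<^sup>2"
proof -
  let ?S = "\<lambda>\<omega>. (\<Sum>k\<in>I. g (X (fst k) (snd k) \<omega>))\<^sup>2"
  have si: "integrable M ?S" by (rule sum_sq_indep(1)[OF assms(1-8)])
  have se: "integral\<^sup>L M ?S = card I * integral\<^sup>L M (\<lambda>\<omega>. (g (X 0 0 \<omega>))\<^sup>2)"
    by (rule sum_sq_indep(2)[OF assms(1-8)])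
  have eq: "{\<omega>\<in>space M. t \<le> \<bar>\<Sum>k\<in>I. g (X (fst k) (snd k) \<omega>)\<bar>} = {\<omega>\<in>space M. t\<^sup>2 \<le> ?S \<omega>}"
  proof -
    have "t \<le> \<bar>x\<bar> \<longleftrightarrow> t\<^sup>2 \<le> x\<^sup>2" for x :: real
      using t by (metis abs_le_square_iff abs_of_pos)
    then show ?thesis by auto
  qed
  have "measure M {\<omega>\<in>space M. t\<^sup>2 \<le> ?S \<omega>} \<le> integral\<^sup>L M ?S / t\<^sup>2"
    by (rule integral_Markov_inequality_measure[OF si, where A="space M"]) (use t in auto)
  then show ?thesis unfolding eq se .
qed

lemma pow4_integrable:
  fixes f :: "'a \<Rightarrow> real"
  assumes P: "prob_space M" and fm: "f \<in> borel_measurable M" and nn: "\<And>\<omega>. f \<omega> \<ge> 0"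
    and beta: "beta \<ge> 4" and int: "integrable M (\<lambda>\<omega>. f \<omega> powr beta)"
  shows "integrable M (\<lambda>\<omega>. f \<omega> ^ 4)"
proof -
  interpret prob_space M by fact
  show ?thesis
  proof (rule Bochner_Integration.integrable_bound[of _ "\<lambda>\<omega>. 1 + f \<omega> powr beta"])
    show "integrable M (\<lambda>\<omega>. 1 + f \<omega> powr beta)" using int by auto
    show "(\<lambda>\<omega>. f \<omega> ^ 4) \<in> borel_measurable M" using fm by measurable
    show "AE x in M. norm (f x ^ 4) \<le> norm (1 + f x powr beta)"
    proof (rule AE_I2)
      fix x
      have "f x ^ 4 \<le> 1 + f x powr beta"
      proof (cases "f x \<le> 1")
        case True
        then have "f x ^ 4 \<le> 1" using nn[of x] by (simp add: power_le_one)
        moreover have "f x powr beta \<ge> 0" by simp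
        ultimately show ?thesis by linarith
      next
        case False
        then have fx: "f x > 1" by simp
        have "f x ^ 4 = f x powr (real 4)" using fx by (simp add: powr_realpow)
        also have "\<dots> \<le> f x powr beta" using fx beta by (intro powr_mono) auto
        finally show ?thesis by simp
      qed
      then show "norm (f x ^ 4) \<le> norm (1 + f x powr beta)" using nn[of x] by simp
    qed
  qed
qed

lemma norm_diff_pow4:
  fixes x m :: "'b::real_normed_vector"
  shows "norm (x - m) ^ 4 \<le> 16 * (norm x ^ 4 + norm m ^ 4)"
proof -
  have "norm (x - m) \<le> norm x + norm m" by (rule norm_triangle_ineq4)
  also have "\<dots> \<le> 2 * max (norm x) (norm m)" by simp
  finally have "norm (x - m) ^ 4 \<le> (2 * max (norm x) (norm m)) ^ 4"
    by (intro power_mono) auto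
  also have "\<dots> = 16 * max (norm x) (norm m) ^ 4" by (simp add: power_mult_distrib)
  also have "max (norm x) (norm m) ^ 4 \<le> norm x ^ 4 + norm m ^ 4"
    by (cases "norm x \<le> norm m") (auto simp: max_def)
  finally show ?thesis by simp
qed

lemma z4_integrable:
  fixes X0 :: "'a \<Rightarrow> 'b::euclidean_space"
  assumes P: "prob_space M" and fm: "X0 \<in> borel_measurable M"
    and beta: "beta \<ge> 4" and int: "integrable M (\<lambda>\<omega>. norm (X0 \<omega>) powr beta)"
  shows "integrable M (\<lambda>\<omega>. norm (X0 \<omega> - mu) ^ 4)"
proof -
  interpret prob_space M by fact
  have i4: "integrable M (\<lambda>\<omega>. norm (X0 \<omega>) ^ 4)"
    by (rule pow4_integrable[OF P _ _ beta int]) (use fm in auto)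
  show ?thesis
  proof (rule Bochner_Integration.integrable_bound[of _ "\<lambda>\<omega>. 16 * (norm (X0 \<omega>) ^ 4 + norm mu ^ 4)"])
    show "integrable M (\<lambda>\<omega>. 16 * (norm (X0 \<omega>) ^ 4 + norm mu ^ 4))" using i4 by auto
    show "(\<lambda>\<omega>. norm (X0 \<omega> - mu) ^ 4) \<in> borel_measurable M" using fm by measurable
    show "AE x in M. norm (norm (X0 x - mu) ^ 4) \<le> norm (16 * (norm (X0 x) ^ 4 + norm mu ^ 4))"
      using norm_diff_pow4[of "X0 _" mu] by simp
  qed
qed

lemma ln_quad_bound:
  fixes x :: real assumes "\<bar>x\<bar> \<le> 1/2"
  shows "ln (1 + x) \<le> x - x\<^sup>2 / 3"
proof -
  define h where "h y = y - y\<^sup>2 / 3 - ln (1 + y)" for y :: real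
  have D: "DERIV h y :> (1 - 2 * y / 3 - 1 / (1 + y))" if "\<bar>y\<bar> \<le> 1/2" for y
  proof -
    have "1 + y > 0" using that by auto
    then show ?thesis unfolding h_def
      by (auto intro!: derivative_eq_intros simp: power2_eq_square field_simps)
  qed
  have eq: "1 - 2 * y / 3 - 1 / (1 + y) = y * (1 - 2 * y) / (3 * (1 + y))" if "\<bar>y\<bar> \<le> 1/2" for y :: real
  proof -
    have "1 + y > 0" using that by auto
    then show ?thesis by (simp add: field_simps power2_eq_square)
  qed
  have h0: "h 0 = 0" by (simp add: h_def)
  have "h x \<ge> 0"
  proof (cases "x \<ge> 0")
    case True
    have "h 0 \<le> h x"
    proof (rule DERIV_nonneg_imp_nondecreasing[of 0 x h, OF True])
      fix y assume y: "0 \<le> y" "y \<le> x"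
      then have ay: "\<bar>y\<bar> \<le> 1/2" using assms by auto
      have "y * (1 - 2 * y) / (3 * (1 + y)) \<ge> 0" using y ay by (intro divide_nonneg_nonneg mult_nonneg_nonneg) auto
      then show "\<exists>d. DERIV h y :> d \<and> d \<ge> 0" using D[OF ay] eq[OF ay] by auto
    qed
    then show ?thesis using h0 by simp
  next
    case False
    have "h x \<ge> h 0"
    proof (rule DERIV_nonpos_imp_nonincreasing[of x 0 h])
      show "x \<le> 0" using False by simp
      fix y assume y: "x \<le> y" "y \<le> 0"
      then have ay: "\<bar>y\<bar> \<le> 1/2" using assms by auto
      have "y * (1 - 2 * y) \<le> 0" using y ay by (intro mult_nonpos_nonneg) auto
      then have "y * (1 - 2 * y) / (3 * (1 + y)) \<le> 0" using ay by (intro divide_nonpos_nonneg) auto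
      then show "\<exists>d. DERIV h y :> d \<and> d \<le> 0" using D[OF ay] eq[OF ay] by auto
    qed
    then show ?thesis using h0 by simp
  qed
  then show ?thesis by (simp add: h_def)
qed

definition FF :: "(nat \<Rightarrow> nat \<Rightarrow> 'b::euclidean_space) \<Rightarrow> nat \<Rightarrow> nat \<Rightarrow> 'b \<Rightarrow> real" where
  "FF z K n l = (\<Sum>i<K. \<Sum>j<n. ln (1 + l \<bullet> z i j))"

definition DD :: "(nat \<Rightarrow> nat \<Rightarrow> 'b::euclidean_space) \<Rightarrow> nat \<Rightarrow> nat \<Rightarrow> 'b set" where
  "DD z K n = {l. \<forall>i<K. \<forall>j<n. 1 + l \<bullet> z i j > 0}"

lemma FF_concave:
  assumes "l1 \<in> DD z K n" "l2 \<in> DD z K n" "0 \<le> t" "t \<le> 1"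
  shows "(1 - t) *\<^sub>R l1 + t *\<^sub>R l2 \<in> DD z K n"
    and "FF z K n ((1 - t) *\<^sub>R l1 + t *\<^sub>R l2) \<ge> (1 - t) * FF z K n l1 + t * FF z K n l2"
proof -
  have key: "1 + ((1 - t) *\<^sub>R l1 + t *\<^sub>R l2) \<bullet> z i j = (1 - t) * (1 + l1 \<bullet> z i j) + t * (1 + l2 \<bullet> z i j)" for i j
    by (simp add: inner_add_left algebra_simps)
  show "(1 - t) *\<^sub>R l1 + t *\<^sub>R l2 \<in> DD z K n"
  proof -
    { fix i j assume ij: "i < K" "j < n"
      have a: "1 + l1 \<bullet> z i j > 0" "1 + l2 \<bullet> z i j > 0" using assms(1,2) ij by (auto simp: DD_def)
      have "(1 - t) * (1 + l1 \<bullet> z i j) + t * (1 + l2 \<bullet> z i j) > 0"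
      proof (cases "t = 0")
        case True then show ?thesis using a by simp
      next
        case False
        then have "t > 0" using assms by simp
        then show ?thesis using a assms by (smt (verit) mult_nonneg_nonneg mult_pos_pos)
      qed
      then have "1 + ((1 - t) *\<^sub>R l1 + t *\<^sub>R l2) \<bullet> z i j > 0" using key by simp }
    then show ?thesis by (auto simp: DD_def)
  qed
  have "ln (1 + ((1 - t) *\<^sub>R l1 + t *\<^sub>R l2) \<bullet> z i j) \<ge> (1 - t) * ln (1 + l1 \<bullet> z i j) + t * ln (1 + l2 \<bullet> z i j)"
    if ij: "i < K" "j < n" for i j
  proof -
    have a: "1 + l1 \<bullet> z i j \<in> {0<..}" "1 + l2 \<bullet> z i j \<in> {0<..}" using assms(1,2) ij by (auto simp: DD_def)
    have "(1 - t) * ln (1 + l1 \<bullet> z i j) + t * ln (1 + l2 \<bullet> z i j) \<le> ln ((1 - t) *\<^sub>R (1 + l1 \<bullet> z i j) + t *\<^sub>R (1 + l2 \<bullet> z i j))"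
      using ln_concave a assms(3,4) unfolding concave_on_iff by (metis diff_add_cancel diff_ge_0_iff_ge)
    then show ?thesis using key by simp
  qed
  then have "(\<Sum>i<K. \<Sum>j<n. (1 - t) * ln (1 + l1 \<bullet> z i j) + t * ln (1 + l2 \<bullet> z i j)) \<le> FF z K n ((1 - t) *\<^sub>R l1 + t *\<^sub>R l2)"
    unfolding FF_def by (intro sum_mono) auto
  then show "FF z K n ((1 - t) *\<^sub>R l1 + t *\<^sub>R l2) \<ge> (1 - t) * FF z K n l1 + t * FF z K n l2"
    by (simp add: FF_def sum.distrib sum_distrib_left)
qed

lemma FF_zero: "FF z K n 0 = 0" by (simp add: FF_def)
lemma DD_zero: "0 \<in> DD z K n" by (simp add: DD_def)

lemma core_argmax:
  fixes z :: "nat \<Rightarrow> nat \<Rightarrow> 'b::euclidean_space"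
  assumes r: "r > 0"
    and small: "\<And>i j. i < K \<Longrightarrow> j < n \<Longrightarrow> r * norm (z i j) \<le> 1/2"
    and neg: "\<And>l. norm l = r \<Longrightarrow> FF z K n l < 0"
  shows "\<exists>l\<in>DD z K n. \<forall>l'\<in>DD z K n. FF z K n l' \<le> FF z K n l"
    and "\<And>l. l \<in> DD z K n \<Longrightarrow> (\<forall>l'\<in>DD z K n. FF z K n l' \<le> FF z K n l) \<Longrightarrow> norm l < r"
proof -
  have ball_sub: "cball 0 r \<subseteq> DD z K n"
  proof
    fix l :: 'b assume "l \<in> cball 0 r"
    then have l: "norm l \<le> r" by simp
    { fix i j assume ij: "i < K" "j < n"
      have "\<bar>l \<bullet> z i j\<bar> \<le> norm l * norm (z i j)" by (rule Cauchy_Schwarz_ineq2)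
      also have "\<dots> \<le> r * norm (z i j)" using l by (simp add: mult_right_mono)
      also have "\<dots> \<le> 1/2" using small ij .
      finally have "1 + l \<bullet> z i j > 0" by auto }
    then show "l \<in> DD z K n" by (auto simp: DD_def)
  qed
  have bound: "norm l < r" if l: "l \<in> DD z K n" and ge: "FF z K n l \<ge> 0" for l
  proof (rule ccontr)
    assume "\<not> norm l < r"
    then have nl: "norm l \<ge> r" by simp
    define t where "t = r / norm l"
    have nlp: "norm l > 0" using nl r by linarith
    have t: "0 < t" "t \<le> 1" using nl r nlp by (auto simp: t_def field_simps)
    have "(1 - t) *\<^sub>R 0 + t *\<^sub>R l = t *\<^sub>R l" by simp
    have "FF z K n ((1 - t) *\<^sub>R 0 + t *\<^sub>R l) \<ge> (1 - t) * FF z K n 0 + t * FF z K n l"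
      using FF_concave(2)[OF DD_zero l] t by auto
    moreover have "t * FF z K n l \<ge> 0" using ge t by simp
    ultimately have "FF z K n (t *\<^sub>R l) \<ge> 0" by (simp add: FF_zero)
    moreover have "norm (t *\<^sub>R l) = r"
    proof -
      have "norm (t *\<^sub>R l) = t * norm l" using t by simp
      also have "\<dots> = r" unfolding t_def using nlp by simp
      finally show ?thesis .
    qed
    moreover have "FF z K n (t *\<^sub>R l) < 0" by (rule neg) fact
    ultimately show False by linarith
  qed
  show "\<And>l. l \<in> DD z K n \<Longrightarrow> (\<forall>l'\<in>DD z K n. FF z K n l' \<le> FF z K n l) \<Longrightarrow> norm l < r"
  proof -
    fix l assume l: "l \<in> DD z K n" and mx: "\<forall>l'\<in>DD z K n. FF z K n l' \<le> FF z K n l"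
    have "FF z K n 0 \<le> FF z K n l" using mx DD_zero by blast
    then show "norm l < r" using bound[OF l] by (simp add: FF_zero)
  qed
  have cont: "continuous_on (cball 0 r) (FF z K n)"
  proof -
    have "continuous_on (cball 0 r) (\<lambda>l. ln (1 + l \<bullet> z i j))" if ij: "i < K" "j < n" for i j
    proof (rule continuous_on_ln)
      show "continuous_on (cball 0 r) (\<lambda>l. 1 + l \<bullet> z i j)" by (intro continuous_intros)
      show "\<forall>l\<in>cball 0 r. 1 + l \<bullet> z i j \<noteq> 0"
      proof
      fix l :: 'b assume "l \<in> cball 0 r"
      then have "l \<in> DD z K n" using ball_sub by blast
      then show "1 + l \<bullet> z i j \<noteq> 0" using ij unfolding DD_def by fastforce
      qed
    qed
    then show ?thesis unfolding FF_def by (intro continuous_on_sum) auto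
  qed
  obtain m where m: "m \<in> cball 0 r" "\<forall>y\<in>cball 0 r. FF z K n y \<le> FF z K n m"
    using continuous_attains_sup[OF compact_cball _ cont] r by auto
  have mD: "m \<in> DD z K n" using m ball_sub by auto
  have m0: "FF z K n m \<ge> 0" using m(2)[rule_format, of 0] r by (simp add: FF_zero)
  have mr: "norm m < r" using bound[OF mD m0] .
  show "\<exists>l\<in>DD z K n. \<forall>l'\<in>DD z K n. FF z K n l' \<le> FF z K n l"
  proof (intro bexI[OF _ mD] ballI)
    fix l' assume l': "l' \<in> DD z K n"
    show "FF z K n l' \<le> FF z K n m"
    proof (rule ccontr)
      assume gt: "\<not> FF z K n l' \<le> FF z K n m"
      then have ne: "l' \<noteq> m" by auto
      define t where "t = min 1 ((r - norm m) / norm (l' - m))"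
      have t: "0 < t" "t \<le> 1" using mr ne by (auto simp: t_def)
      have "norm ((1 - t) *\<^sub>R m + t *\<^sub>R l') = norm (m + t *\<^sub>R (l' - m))"
        by (simp add: algebra_simps)
      also have "\<dots> \<le> norm m + t * norm (l' - m)"
        using norm_triangle_ineq[of m "t *\<^sub>R (l' - m)"] t by simp
      also have "t * norm (l' - m) \<le> r - norm m"
      proof -
        have "t \<le> (r - norm m) / norm (l' - m)" by (simp add: t_def)
        then show ?thesis using ne by (simp add: field_simps)
      qed
      finally have "(1 - t) *\<^sub>R m + t *\<^sub>R l' \<in> cball 0 r" by simp
      then have le: "FF z K n ((1 - t) *\<^sub>R m + t *\<^sub>R l') \<le> FF z K n m" using m(2) by blast
      have "FF z K n ((1 - t) *\<^sub>R m + t *\<^sub>R l') \<ge> (1 - t) * FF z K n m + t * FF z K n l'"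
        using FF_concave(2)[OF mD l'] t by auto
      moreover have "(1 - t) * FF z K n m + t * FF z K n l' > FF z K n m"
        using gt t by (simp add: algebra_simps)
      ultimately show False using le by simp
    qed
  qed
qed

lemma sphere_neg:
  fixes z :: "nat \<Rightarrow> nat \<Rightarrow> 'b::euclidean_space"
  assumes r: "r > 0" and c: "c > 0"
    and small: "\<And>i j. i < K \<Longrightarrow> j < n \<Longrightarrow> r * norm (z i j) \<le> 1/2"
    and mean: "norm (\<Sum>i<K. \<Sum>j<n. z i j) < r * c * N / 3"
    and quad: "\<And>\<theta>. norm \<theta> = 1 \<Longrightarrow> (\<Sum>i<K. \<Sum>j<n. (\<theta> \<bullet> z i j)\<^sup>2) \<ge> c * N"
    and l: "norm l = r"
  shows "FF z K n l < 0"
proof -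
  have A: "FF z K n l \<le> (\<Sum>i<K. \<Sum>j<n. l \<bullet> z i j - (l \<bullet> z i j)\<^sup>2 / 3)"
    unfolding FF_def
  proof (intro sum_mono)
    fix i j assume ij: "i \<in> {..<K}" "j \<in> {..<n}"
    have "\<bar>l \<bullet> z i j\<bar> \<le> norm l * norm (z i j)" by (rule Cauchy_Schwarz_ineq2)
    also have "\<dots> \<le> 1/2" using small ij l by auto
    finally show "ln (1 + l \<bullet> z i j) \<le> l \<bullet> z i j - (l \<bullet> z i j)\<^sup>2 / 3" by (rule ln_quad_bound)
  qed
  have B: "(\<Sum>i<K. \<Sum>j<n. l \<bullet> z i j - (l \<bullet> z i j)\<^sup>2 / 3) = l \<bullet> (\<Sum>i<K. \<Sum>j<n. z i j) - (\<Sum>i<K. \<Sum>j<n. (l \<bullet> z i j)\<^sup>2) / 3"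
    by (simp add: sum_subtractf inner_sum_right sum_divide_distrib)
  have C: "l \<bullet> (\<Sum>i<K. \<Sum>j<n. z i j) < r * (r * c * N / 3)"
  proof -
    have "l \<bullet> (\<Sum>i<K. \<Sum>j<n. z i j) \<le> norm l * norm (\<Sum>i<K. \<Sum>j<n. z i j)"
      by (rule Cauchy_Schwarz_ineq2[THEN order_trans[OF abs_ge_self]])
    also have "\<dots> < r * (r * c * N / 3)" using mean l r by simp
    finally show ?thesis .
  qed
  have E: "(\<Sum>i<K. \<Sum>j<n. (l \<bullet> z i j)\<^sup>2) \<ge> r\<^sup>2 * (c * N)"
  proof -
    define \<theta> where "\<theta> = (1 / r) *\<^sub>R l"
    have nt: "norm \<theta> = 1" using l r by (simp add: \<theta>_def)
    have lt: "l = r *\<^sub>R \<theta>" using r by (simp add: \<theta>_def)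
    have "(\<Sum>i<K. \<Sum>j<n. (l \<bullet> z i j)\<^sup>2) = r\<^sup>2 * (\<Sum>i<K. \<Sum>j<n. (\<theta> \<bullet> z i j)\<^sup>2)"
      unfolding lt by (simp add: power_mult_distrib sum_distrib_left)
    then show ?thesis using quad[OF nt] by (simp add: mult_left_mono)
  qed
  have "r * (r * c * N / 3) = r\<^sup>2 * (c * N) / 3" by (simp add: power2_eq_square)
  then show ?thesis using A B C E by linarith
qed

lemma tail_markov:
  fixes Y :: "'a \<Rightarrow> 'b::euclidean_space"
  assumes P: "prob_space M" and Ym: "Y \<in> borel_measurable M"
    and int: "integrable M (\<lambda>\<omega>. norm (Y \<omega>) powr beta)" and beta: "beta > 0" and s: "s > 0"
  shows "measure M {\<omega>\<in>space M. s \<le> norm (Y \<omega>)}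
     \<le> integral\<^sup>L M (\<lambda>\<omega>. if s \<le> norm (Y \<omega>) then norm (Y \<omega>) powr beta else 0) / s powr beta"
proof -
  interpret prob_space M by fact
  let ?u = "\<lambda>\<omega>. if s \<le> norm (Y \<omega>) then norm (Y \<omega>) powr beta else 0"
  have ui: "integrable M ?u"
  proof (rule Bochner_Integration.integrable_bound[OF int])
    show "?u \<in> borel_measurable M" using Ym by measurable
    show "AE x in M. norm (?u x) \<le> norm (norm (Y x) powr beta)" by auto
  qed
  have sub: "{\<omega>\<in>space M. s \<le> norm (Y \<omega>)} \<subseteq> {\<omega>\<in>space M. s powr beta \<le> ?u \<omega>}"
  proof safe
    fix \<omega> assume "s \<le> norm (Y \<omega>)"
    then show "s powr beta \<le> ?u \<omega>" using s beta by (auto intro!: powr_mono2)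
  qed
  have "measure M {\<omega>\<in>space M. s \<le> norm (Y \<omega>)} \<le> measure M {\<omega>\<in>space M. s powr beta \<le> ?u \<omega>}"
    by (rule finite_measure_mono[OF sub]) (use ui in measurable)
  also have "\<dots> \<le> integral\<^sup>L M ?u / s powr beta"
    by (rule integral_Markov_inequality_measure[OF ui, where A="space M"]) (use s in auto)
  finally show ?thesis .
qed

lemma tail_integral_lim:
  fixes Y :: "'a \<Rightarrow> 'b::euclidean_space"
  assumes P: "prob_space M" and Ym: "Y \<in> borel_measurable M"
    and int: "integrable M (\<lambda>\<omega>. norm (Y \<omega>) powr beta)" and sl: "filterlim s at_top sequentially"
  shows "(\<lambda>n. integral\<^sup>L M (\<lambda>\<omega>. if s n \<le> norm (Y \<omega>) then norm (Y \<omega>) powr beta else 0)) \<longlonglongrightarrow> 0"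
proof -
  have "(\<lambda>n. integral\<^sup>L M (\<lambda>\<omega>. if s n \<le> norm (Y \<omega>) then norm (Y \<omega>) powr beta else 0)) \<longlonglongrightarrow> integral\<^sup>L M (\<lambda>\<omega>. 0::real)"
  proof (rule integral_dominated_convergence[where w="\<lambda>\<omega>. norm (Y \<omega>) powr beta"])
    show "(\<lambda>\<omega>. 0::real) \<in> borel_measurable M" by simp
    show "\<And>i. (\<lambda>\<omega>. if s i \<le> norm (Y \<omega>) then norm (Y \<omega>) powr beta else 0) \<in> borel_measurable M"
      using Ym by measurable
    show "integrable M (\<lambda>\<omega>. norm (Y \<omega>) powr beta)" by fact
    show "AE x in M. (\<lambda>i. if s i \<le> norm (Y x) then norm (Y x) powr beta else 0) \<longlonglongrightarrow> 0"
    proof (rule AE_I2)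
      fix x
      have "eventually (\<lambda>i. s i > norm (Y x)) sequentially"
        using sl by (simp add: filterlim_at_top_dense)
      then have "eventually (\<lambda>i. (if s i \<le> norm (Y x) then norm (Y x) powr beta else 0) = 0) sequentially"
        by eventually_elim auto
      then show "(\<lambda>i. if s i \<le> norm (Y x) then norm (Y x) powr beta else 0) \<longlonglongrightarrow> 0"
        by (rule tendsto_eventually)
    qed
    show "\<And>i. AE x in M. norm (if s i \<le> norm (Y x) then norm (Y x) powr beta else 0) \<le> norm (Y x) powr beta"
      by auto
  qed
  then show ?thesis by simp
qed

lemma max_tail:
  fixes X :: "nat \<Rightarrow> nat \<Rightarrow> 'a \<Rightarrow> 'b::euclidean_space"
  assumes P: "prob_space M"
    and meas: "\<And>i j. X i j \<in> borel_measurable M"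
    and ident: "\<And>i j. distr M borel (X i j) = distr M borel (X 0 0)"
    and int: "integrable M (\<lambda>\<omega>. norm (X 0 0 \<omega>) powr beta)" and beta: "beta > 0"
    and eta: "eta > 0"
    and Kb: "eventually (\<lambda>n. real (n * K n) \<le> C * real n powr (beta / 2)) sequentially"
  shows "(\<lambda>n. measure M (\<Union>k\<in>{..<K n} \<times> {..<n}. {\<omega>\<in>space M. eta * sqrt n < norm (X (fst k) (snd k) \<omega> - mu)})) \<longlonglongrightarrow> 0"
proof -
  interpret prob_space M by fact
  define s where "s n = eta * sqrt (real n) / 2" for n
  define U where "U n = integral\<^sup>L M (\<lambda>\<omega>. if s n \<le> norm (X 0 0 \<omega>) then norm (X 0 0 \<omega>) powr beta else 0)" for n
  have sl: "filterlim s at_top sequentially"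
  proof -
    have "filterlim (\<lambda>n. sqrt (real n)) at_top sequentially"
      by (rule filterlim_compose[OF sqrt_at_top filterlim_real_sequentially])
    then have "filterlim (\<lambda>n. (eta / 2) * sqrt (real n)) at_top sequentially"
      using eta by (intro filterlim_tendsto_pos_mult_at_top[OF tendsto_const]) auto
    moreover have "(\<lambda>n. (eta / 2) * sqrt (real n)) = s" by (auto simp: s_def)
    ultimately show ?thesis by simp
  qed
  have Ul: "U \<longlonglongrightarrow> 0"
    unfolding U_def by (rule tail_integral_lim[OF P meas int sl])
  have ev_big: "eventually (\<lambda>n. 2 * norm mu \<le> eta * sqrt (real n) \<and> n > 0) sequentially"
  proof -
    have "eventually (\<lambda>n. norm mu \<le> s n) sequentially"
      using sl by (simp add: filterlim_at_top)
    then have "eventually (\<lambda>n. 2 * norm mu \<le> eta * sqrt (real n)) sequentially"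
      by eventually_elim (simp add: s_def)
    moreover have "eventually (\<lambda>n::nat. n > 0) sequentially" by (simp add: eventually_gt_at_top)
    ultimately show ?thesis by eventually_elim auto
  qed
  define Bn where "Bn n = (\<Union>k\<in>{..<K n} \<times> {..<n}. {\<omega>\<in>space M. eta * sqrt n < norm (X (fst k) (snd k) \<omega> - mu)})" for n
  have bound: "measure M (Bn n) \<le> C * (2 / eta) powr beta * U n"
    if n: "2 * norm mu \<le> eta * sqrt (real n)" "n > 0" "real (n * K n) \<le> C * real n powr (beta / 2)" for n
  proof -
    let ?A = "{x::'b. eta * sqrt n < norm (x - mu)}"
    have Ab: "?A \<in> sets borel" by measurable
    have sn: "s n > 0" using n eta by (simp add: s_def)
    have "measure M (Bn n) \<le> (\<Sum>k\<in>{..<K n} \<times> {..<n}. measure M {\<omega>\<in>space M. eta * sqrt n < norm (X (fst k) (snd k) \<omega> - mu)})"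
      unfolding Bn_def by (rule measure_UNION_le) (use meas in auto)
    also have "\<dots> = (\<Sum>k\<in>{..<K n} \<times> {..<n}. measure M {\<omega>\<in>space M. X 0 0 \<omega> \<in> ?A})"
      using transfer_prob[where M=M and X=X, OF ident meas Ab] by (intro sum.cong) auto
    also have "\<dots> = real (n * K n) * measure M {\<omega>\<in>space M. X 0 0 \<omega> \<in> ?A}"
      by (simp add: card_cartesian_product)
    also have "measure M {\<omega>\<in>space M. X 0 0 \<omega> \<in> ?A} \<le> measure M {\<omega>\<in>space M. s n \<le> norm (X 0 0 \<omega>)}"
    proof (rule finite_measure_mono)
      show "{\<omega>\<in>space M. X 0 0 \<omega> \<in> ?A} \<subseteq> {\<omega>\<in>space M. s n \<le> norm (X 0 0 \<omega>)}"
      proof safe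
        fix \<omega> assume "eta * sqrt n < norm (X 0 0 \<omega> - mu)"
        moreover have "norm (X 0 0 \<omega> - mu) \<le> norm (X 0 0 \<omega>) + norm mu" by (rule norm_triangle_ineq4)
        ultimately show "s n \<le> norm (X 0 0 \<omega>)" using n(1) by (simp add: s_def)
      qed
      show "{\<omega>\<in>space M. s n \<le> norm (X 0 0 \<omega>)} \<in> sets M" using meas by measurable
    qed
    also have "measure M {\<omega>\<in>space M. s n \<le> norm (X 0 0 \<omega>)} \<le> U n / s n powr beta"
      unfolding U_def by (rule tail_markov[OF P meas int beta sn])
    finally have "measure M (Bn n) \<le> real (n * K n) * (U n / s n powr beta)"
      by (simp add: mult_left_mono)
    also have "\<dots> \<le> C * real n powr (beta / 2) * (U n / s n powr beta)"
    proof (rule mult_right_mono[OF n(3)])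
      have "U n \<ge> 0" unfolding U_def by (intro integral_nonneg_AE) auto
      then show "0 \<le> U n / s n powr beta" by simp
    qed
    also have "s n powr beta = (eta / 2) powr beta * real n powr (beta / 2)"
    proof -
      have "s n = (eta / 2) * sqrt (real n)" by (simp add: s_def)
      then have "s n powr beta = (eta / 2) powr beta * sqrt (real n) powr beta"
        using eta by (simp only: powr_mult[of "eta/2" "sqrt (real n)"])
      also have "sqrt (real n) powr beta = real n powr (beta / 2)"
        by (simp add: powr_half_sqrt[symmetric] powr_powr)
      finally show ?thesis .
    qed
    also have "C * real n powr (beta / 2) * (U n / ((eta / 2) powr beta * real n powr (beta / 2)))
       = C * (2 / eta) powr beta * U n"
      using n(2) eta by (simp add: field_simps powr_divide)
    finally show ?thesis .
  qed
  have ev: "eventually (\<lambda>n. measure M (Bn n) \<le> C * (2 / eta) powr beta * U n) sequentially"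
    using ev_big Kb by eventually_elim (use bound in auto)
  have "(\<lambda>n. C * (2 / eta) powr beta * U n) \<longlonglongrightarrow> C * (2 / eta) powr beta * 0"
    by (intro tendsto_mult tendsto_const Ul)
  then have lim: "(\<lambda>n. C * (2 / eta) powr beta * U n) \<longlonglongrightarrow> 0" by simp
  have "(\<lambda>n. measure M (Bn n)) \<longlonglongrightarrow> 0"
    by (rule tendsto_sandwich[OF _ ev tendsto_const lim]) auto
  then show ?thesis unfolding Bn_def .
qed

lemma sq_le_1_pow4: "(x::real)\<^sup>2 \<le> 1 + x ^ 4"
proof (cases "\<bar>x\<bar> \<le> 1")
  case True
  then have "x\<^sup>2 \<le> 1" by (simp add: abs_le_square_iff[symmetric] abs_square_le_1)
  moreover have "x ^ 4 \<ge> 0" by (simp add: zero_le_even_power)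
  ultimately show ?thesis by linarith
next
  case False
  then have "x\<^sup>2 \<ge> 1" by (simp add: abs_square_le_1[symmetric])
  then have "x\<^sup>2 * 1 \<le> x\<^sup>2 * x\<^sup>2" by (intro mult_left_mono) auto
  then have "x\<^sup>2 \<le> x\<^sup>2 * x\<^sup>2" by simp
  also have "\<dots> = x ^ 4" by (simp add: power2_eq_square power4_eq_xxxx)
  finally show ?thesis by simp
qed

context
  fixes M :: "'a measure" and X0 :: "'a \<Rightarrow> 'b::euclidean_space" and mu :: 'b
  assumes P: "prob_space M" and Xm[measurable]: "X0 \<in> borel_measurable M"
    and z4: "integrable M (\<lambda>\<omega>. norm (X0 \<omega> - mu) ^ 4)"
begin

lemma z2_int: "integrable M (\<lambda>\<omega>. norm (X0 \<omega> - mu) ^ 2)"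
proof -
  interpret prob_space M by (rule P)
  show ?thesis
  proof (rule Bochner_Integration.integrable_bound[of _ "\<lambda>\<omega>. 1 + norm (X0 \<omega> - mu) ^ 4"])
    show "integrable M (\<lambda>\<omega>. 1 + norm (X0 \<omega> - mu) ^ 4)" using z4 by auto
    show "(\<lambda>\<omega>. norm (X0 \<omega> - mu) ^ 2) \<in> borel_measurable M" by measurable
    show "AE x in M. norm (norm (X0 x - mu) ^ 2) \<le> norm (1 + norm (X0 x - mu) ^ 4)"
    proof (rule AE_I2)
      fix x
      have "norm (X0 x - mu) ^ 2 \<le> 1 + norm (X0 x - mu) ^ 4" by (rule sq_le_1_pow4)
      moreover have "norm (X0 x - mu) ^ 4 \<ge> 0" by simp
      ultimately show "norm (norm (X0 x - mu) ^ 2) \<le> norm (1 + norm (X0 x - mu) ^ 4)" by simp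
    qed
  qed
qed

lemma prod_int: "integrable M (\<lambda>\<omega>. ((X0 \<omega> - mu) \<bullet> b) * ((X0 \<omega> - mu) \<bullet> b'))"
  if "b \<in> Basis" "b' \<in> Basis"
proof (rule Bochner_Integration.integrable_bound[OF z2_int])
  show "AE x in M. norm (((X0 x - mu) \<bullet> b) * ((X0 x - mu) \<bullet> b')) \<le> norm (norm (X0 x - mu) ^ 2)"
  proof (rule AE_I2)
    fix x
    have "\<bar>(X0 x - mu) \<bullet> b\<bar> \<le> norm (X0 x - mu)" using that by (simp add: Basis_le_norm)
    moreover have "\<bar>(X0 x - mu) \<bullet> b'\<bar> \<le> norm (X0 x - mu)" using that by (simp add: Basis_le_norm)
    ultimately have "\<bar>(X0 x - mu) \<bullet> b\<bar> * \<bar>(X0 x - mu) \<bullet> b'\<bar> \<le> norm (X0 x - mu) * norm (X0 x - mu)"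
      by (intro mult_mono) auto
    then show "norm (((X0 x - mu) \<bullet> b) * ((X0 x - mu) \<bullet> b')) \<le> norm (norm (X0 x - mu) ^ 2)"
      by (simp add: abs_mult power2_eq_square)
  qed
qed simp

lemma prodsq_int: "integrable M (\<lambda>\<omega>. (((X0 \<omega> - mu) \<bullet> b) * ((X0 \<omega> - mu) \<bullet> b'))\<^sup>2)"
  if "b \<in> Basis" "b' \<in> Basis"
proof (rule Bochner_Integration.integrable_bound[OF z4])
  show "AE x in M. norm ((((X0 x - mu) \<bullet> b) * ((X0 x - mu) \<bullet> b'))\<^sup>2) \<le> norm (norm (X0 x - mu) ^ 4)"
  proof (rule AE_I2)
    fix x
    have "\<bar>(X0 x - mu) \<bullet> b\<bar> \<le> norm (X0 x - mu)" using that by (simp add: Basis_le_norm)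
    moreover have "\<bar>(X0 x - mu) \<bullet> b'\<bar> \<le> norm (X0 x - mu)" using that by (simp add: Basis_le_norm)
    ultimately have "\<bar>(X0 x - mu) \<bullet> b\<bar> * \<bar>(X0 x - mu) \<bullet> b'\<bar> \<le> norm (X0 x - mu) * norm (X0 x - mu)"
      by (intro mult_mono) auto
    then have "(\<bar>(X0 x - mu) \<bullet> b\<bar> * \<bar>(X0 x - mu) \<bullet> b'\<bar>)\<^sup>2 \<le> (norm (X0 x - mu) * norm (X0 x - mu))\<^sup>2"
      by (intro power_mono) auto
    then show "norm ((((X0 x - mu) \<bullet> b) * ((X0 x - mu) \<bullet> b'))\<^sup>2) \<le> norm (norm (X0 x - mu) ^ 4)"
      by (simp add: power_mult_distrib power2_eq_square power4_eq_xxxx abs_mult)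
  qed
qed simp

definition "QQ b b' = integral\<^sup>L M (\<lambda>\<omega>. ((X0 \<omega> - mu) \<bullet> b) * ((X0 \<omega> - mu) \<bullet> b'))"

lemma thz_int: "integrable M (\<lambda>\<omega>. (\<theta> \<bullet> (X0 \<omega> - mu))\<^sup>2)"
proof (rule Bochner_Integration.integrable_bound[of _ "\<lambda>\<omega>. (norm \<theta>)\<^sup>2 * norm (X0 \<omega> - mu) ^ 2"])
  show "integrable M (\<lambda>\<omega>. (norm \<theta>)\<^sup>2 * norm (X0 \<omega> - mu) ^ 2)" using z2_int by auto
  show "AE x in M. norm ((\<theta> \<bullet> (X0 x - mu))\<^sup>2) \<le> norm ((norm \<theta>)\<^sup>2 * norm (X0 x - mu) ^ 2)"
  proof (rule AE_I2)
    fix x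
    have "\<bar>\<theta> \<bullet> (X0 x - mu)\<bar> \<le> norm \<theta> * norm (X0 x - mu)" by (rule Cauchy_Schwarz_ineq2)
    then have "\<bar>\<theta> \<bullet> (X0 x - mu)\<bar>\<^sup>2 \<le> (norm \<theta> * norm (X0 x - mu))\<^sup>2" by (intro power_mono) auto
    then show "norm ((\<theta> \<bullet> (X0 x - mu))\<^sup>2) \<le> norm ((norm \<theta>)\<^sup>2 * norm (X0 x - mu) ^ 2)"
      by (simp add: power_mult_distrib)
  qed
qed simp

lemma quad_eq: "integral\<^sup>L M (\<lambda>\<omega>. (\<theta> \<bullet> (X0 \<omega> - mu))\<^sup>2) = (\<Sum>b\<in>Basis. \<Sum>b'\<in>Basis. (\<theta> \<bullet> b) * (\<theta> \<bullet> b') * QQ b b')"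
proof -
  have e: "(\<theta> \<bullet> (X0 \<omega> - mu))\<^sup>2 = (\<Sum>b\<in>Basis. \<Sum>b'\<in>Basis. (\<theta> \<bullet> b) * (\<theta> \<bullet> b') * (((X0 \<omega> - mu) \<bullet> b) * ((X0 \<omega> - mu) \<bullet> b')))" for \<omega>
  proof -
    have "(\<theta> \<bullet> (X0 \<omega> - mu))\<^sup>2 = (\<Sum>b\<in>Basis. (\<theta> \<bullet> b) * ((X0 \<omega> - mu) \<bullet> b)) * (\<Sum>b'\<in>Basis. (\<theta> \<bullet> b') * ((X0 \<omega> - mu) \<bullet> b'))"
    proof -
      have h: "\<theta> \<bullet> (X0 \<omega> - mu) = (\<Sum>b\<in>Basis. (\<theta> \<bullet> b) * ((X0 \<omega> - mu) \<bullet> b))"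
        by (rule euclidean_inner)
      show ?thesis unfolding power2_eq_square h ..
    qed
    also have "\<dots> = (\<Sum>b\<in>Basis. \<Sum>b'\<in>Basis. ((\<theta> \<bullet> b) * ((X0 \<omega> - mu) \<bullet> b)) * ((\<theta> \<bullet> b') * ((X0 \<omega> - mu) \<bullet> b')))"
      by (rule sum_product)
    also have "\<dots> = (\<Sum>b\<in>Basis. \<Sum>b'\<in>Basis. (\<theta> \<bullet> b) * (\<theta> \<bullet> b') * (((X0 \<omega> - mu) \<bullet> b) * ((X0 \<omega> - mu) \<bullet> b')))"
      by (simp only: mult_ac)
    finally show ?thesis .
  qed
  show ?thesis unfolding e QQ_def
    by (simp add: Bochner_Integration.integral_sum prod_int)
qed

lemma quad_pos:
  assumes cov: "nonsingular_cov M X0 mu" and th: "\<theta> \<noteq> 0"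
  shows "integral\<^sup>L M (\<lambda>\<omega>. (\<theta> \<bullet> (X0 \<omega> - mu))\<^sup>2) > 0"
proof (rule ccontr)
  assume "\<not> ?thesis"
  moreover have "integral\<^sup>L M (\<lambda>\<omega>. (\<theta> \<bullet> (X0 \<omega> - mu))\<^sup>2) \<ge> 0" by (intro integral_nonneg_AE) auto
  ultimately have "integral\<^sup>L M (\<lambda>\<omega>. (\<theta> \<bullet> (X0 \<omega> - mu))\<^sup>2) = 0" by simp
  then have "AE \<omega> in M. (\<theta> \<bullet> (X0 \<omega> - mu))\<^sup>2 = 0"
    using integral_nonneg_eq_0_iff_AE[OF thz_int] by auto
  then have ae: "AE \<omega> in M. (\<theta> \<bullet> (X0 \<omega> - mu)) *\<^sub>R (X0 \<omega> - mu) = 0" by eventually_elim simp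
  have "cov_op M X0 mu \<theta> = integral\<^sup>L M (\<lambda>\<omega>. 0::'b)"
    unfolding cov_op_def by (rule integral_cong_AE) (use ae in auto)
  then have "cov_op M X0 mu \<theta> = 0" by simp
  then show False using cov th unfolding nonsingular_cov_def by blast
qed

lemma quad_lower:
  assumes cov: "nonsingular_cov M X0 mu"
  shows "\<exists>c>0. \<forall>\<theta>. norm \<theta> = 1 \<longrightarrow> (\<Sum>b\<in>Basis. \<Sum>b'\<in>Basis. (\<theta> \<bullet> b) * (\<theta> \<bullet> b') * QQ b b') \<ge> 2 * c"
proof -
  let ?q = "\<lambda>\<theta>::'b. (\<Sum>b\<in>Basis. \<Sum>b'\<in>Basis. (\<theta> \<bullet> b) * (\<theta> \<bullet> b') * QQ b b')"
  have cont: "continuous_on (sphere 0 1) ?q" by (intro continuous_intros)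
  have ne: "sphere (0::'b) 1 \<noteq> {}" by simp
  obtain t where t: "t \<in> sphere 0 1" "\<forall>y\<in>sphere 0 1. ?q t \<le> ?q y"
    using continuous_attains_inf[OF compact_sphere ne cont] by blast
  have "t \<noteq> 0" using t(1) by auto
  then have pos: "?q t > 0" using quad_pos[OF cov] quad_eq by metis
  show ?thesis
  proof (intro exI[of _ "?q t / 2"] conjI allI impI)
    show "?q t / 2 > 0" using pos by simp
    fix \<theta> :: 'b assume "norm \<theta> = 1"
    then have "\<theta> \<in> sphere 0 1" by simp
    then show "2 * (?q t / 2) \<le> ?q \<theta>" using t(2) by simp
  qed
qed

end

lemma meas_hull:
  assumes P: "prob_space M" and S: "S \<subseteq> space M"
  shows "\<exists>A\<in>sets M. S \<subseteq> A \<and> (\<forall>B\<in>sets M. S \<subseteq> B \<longrightarrow> measure M A \<le> measure M B)"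
proof -
  interpret prob_space M by fact
  define F where "F = measure M ` {B\<in>sets M. S \<subseteq> B}"
  define m where "m = Inf F"
  have Fne: "F \<noteq> {}" using S unfolding F_def by auto
  have Fbdd: "bdd_below F" unfolding F_def by (intro bdd_belowI[of _ 0]) auto
  have low: "m \<le> measure M B" if "B \<in> sets M" "S \<subseteq> B" for B
    unfolding m_def by (rule cInf_lower[OF _ Fbdd]) (use that in \<open>auto simp: F_def\<close>)
  have "\<exists>B. B \<in> sets M \<and> S \<subseteq> B \<and> measure M B < m + 1 / Suc k" for k :: nat
  proof -
    have "Inf F < m + 1 / Suc k" unfolding m_def by simp
    then obtain y where "y \<in> F" "y < m + 1 / Suc k" using cInf_lessD[OF Fne] by blast
    then show ?thesis unfolding F_def by auto
  qed
  then obtain B where B: "\<And>k. B k \<in> sets M" "\<And>k. S \<subseteq> B k" "\<And>k. measure M (B k) < m + 1 / Suc k"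
    by metis
  define A where "A = (\<Inter>k. B k)"
  have Am: "A \<in> sets M" unfolding A_def using B(1) by auto
  have SA: "S \<subseteq> A" unfolding A_def using B(2) by auto
  have "measure M A \<le> m"
  proof (rule field_le_epsilon)
    fix e :: real assume e: "e > 0"
    obtain k :: nat where k: "inverse (real (Suc k)) < e" using reals_Archimedean[OF e] by blast
    have "measure M A \<le> measure M (B k)"
      by (rule finite_measure_mono) (auto simp: A_def B(1))
    also have "\<dots> < m + 1 / Suc k" by (rule B(3))
    also have "\<dots> \<le> m + e" using k by (simp add: inverse_eq_divide)
    finally show "measure M A \<le> m + e" by simp
  qed
  then show ?thesis using Am SA low by (meson order_trans)
qed

lemma Krate_bound:
  fixes K :: "nat \<Rightarrow> nat" and beta :: real
  assumes beta: "beta > 2" and Kpos: "\<And>n. K n \<ge> 1"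
    and Krate: "(\<lambda>n. real (K n)) \<in> O(\<lambda>n. real (n * K n) powr (1 - 2 / beta))"
  shows "\<exists>C. eventually (\<lambda>n. real (n * K n) \<le> C * real n powr (beta / 2)) sequentially"
proof -
  obtain c where c: "c > 0" and ev: "eventually (\<lambda>n. norm (real (K n)) \<le> c * norm (real (n * K n) powr (1 - 2 / beta))) sequentially"
    using Krate by (elim landau_o.bigE) auto
  have "eventually (\<lambda>n. real (n * K n) \<le> c powr (beta / 2) * real n powr (beta / 2)) sequentially"
    using ev eventually_gt_at_top[of 0]
  proof eventually_elim
    case (elim n)
    define N where "N = real (n * K n)"
    have Npos: "N > 0" using elim(2) Kpos[of n] by (simp add: N_def)
    have Kle: "real (K n) \<le> c * N powr (1 - 2 / beta)" using elim(1) by (simp add: N_def)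
    have "N = real n * real (K n)" by (simp add: N_def)
    also have "\<dots> \<le> real n * (c * N powr (1 - 2 / beta))" using Kle by (intro mult_left_mono) auto
    also have "N powr (1 - 2 / beta) = N / N powr (2 / beta)"
      using Npos by (simp add: powr_diff)
    finally have "N \<le> real n * c * N / N powr (2 / beta)" by simp
    then have "N powr (2 / beta) \<le> real n * c"
      using Npos by (simp add: field_simps)
    then have "(N powr (2 / beta)) powr (beta / 2) \<le> (real n * c) powr (beta / 2)"
      using beta by (intro powr_mono2) auto
    also have "(N powr (2 / beta)) powr (beta / 2) = N"
      using beta Npos by (simp add: powr_powr)
    also have "(real n * c) powr (beta / 2) = c powr (beta / 2) * real n powr (beta / 2)"
      using c by (simp add: powr_mult mult.commute)
    finally show ?case by (simp add: N_def)
  qed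
  then show ?thesis by blast
qed

lemma det_bound:
  fixes z :: "nat \<Rightarrow> nat \<Rightarrow> 'b::euclidean_space"
  assumes n: "n > 0" and K: "K \<ge> 1" and c: "c > 0"
    and a: "a > 0" and C1: "C1 > 0" and eta: "eta > 0"
    and ae: "(a + C1) * eta \<le> e" and ah: "a * eta \<le> 1/2"
    and zb: "\<And>i j. i < K \<Longrightarrow> j < n \<Longrightarrow> norm (z i j) \<le> eta * sqrt n"
    and mean: "norm (\<Sum>i<K. \<Sum>j<n. z i j) < (a / sqrt (real (n * K))) * c * real (n * K) / 3"
    and quad: "\<And>\<theta>. norm \<theta> = 1 \<Longrightarrow> (\<Sum>i<K. \<Sum>j<n. (\<theta> \<bullet> z i j)\<^sup>2) \<ge> c * real (n * K)"
    and lh: "(\<exists>l\<in>DD z K n. \<forall>l'\<in>DD z K n. FF z K n l' \<le> FF z K n l) \<Longrightarrow>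
             lh \<in> DD z K n \<and> (\<forall>l'\<in>DD z K n. FF z K n l' \<le> FF z K n lh)"
    and l: "l \<in> cball lh (C1 / sqrt n)" and ij: "i < K" "j < n"
  shows "\<bar>l \<bullet> z i j\<bar> \<le> e"
proof -
  define r where "r = a / sqrt (real (n * K))"
  have Npos: "real (n * K) > 0" using n K by simp
  have r: "r > 0" using a Npos by (simp add: r_def)
  have "real n * 1 \<le> real n * real K" using K by (intro mult_left_mono) auto
  then have Nn: "sqrt (real n) \<le> sqrt (real (n * K))" by simp
  have sn: "sqrt (real n) > 0" using n by simp
  have rle: "r \<le> a / sqrt n" unfolding r_def using a sn Nn by (intro divide_left_mono) auto
  have small: "r * norm (z i j) \<le> 1/2" if "i < K" "j < n" for i j
  proof -
    have "r * norm (z i j) \<le> (a / sqrt n) * (eta * sqrt n)"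
      using rle zb[OF that] r by (intro mult_mono) auto
    also have "\<dots> = a * eta" using sn by simp
    finally show ?thesis using ah by simp
  qed
  have neg: "FF z K n l < 0" if "norm l = r" for l
    by (rule sphere_neg[OF r c small _ quad that]) (use mean in \<open>auto simp: r_def\<close>)
  have ex: "\<exists>l\<in>DD z K n. \<forall>l'\<in>DD z K n. FF z K n l' \<le> FF z K n l"
    by (rule core_argmax(1)[OF r small neg])
  from lh[OF ex] have lhD: "lh \<in> DD z K n" and lhm: "\<forall>l'\<in>DD z K n. FF z K n l' \<le> FF z K n lh" by auto
  have lhr: "norm lh < r" by (rule core_argmax(2)[OF r small neg lhD lhm])
  have "norm l \<le> norm lh + norm (l - lh)" by (rule norm_triangle_sub)
  also have "norm (l - lh) \<le> C1 / sqrt n" using l by (simp add: dist_norm norm_minus_commute)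
  finally have "norm l \<le> a / sqrt n + C1 / sqrt n" using lhr rle by simp
  then have nl: "norm l \<le> (a + C1) / sqrt n" by (simp add: add_divide_distrib)
  have "\<bar>l \<bullet> z i j\<bar> \<le> norm l * norm (z i j)" by (rule Cauchy_Schwarz_ineq2)
  also have "\<dots> \<le> ((a + C1) / sqrt n) * (eta * sqrt n)"
    using nl zb[OF ij] a C1 sn by (intro mult_mono) auto
  also have "\<dots> = (a + C1) * eta" using sn by simp
  finally show ?thesis using ae by simp
qed

lemma dsum: "(\<Sum>i<K. \<Sum>j<n. f i j) = (\<Sum>k\<in>{..<K} \<times> {..<n}. f (fst k) (snd k))"
  by (simp add: sum.cartesian_product case_prod_beta)

lemma quad_det:
  fixes z :: "'k \<Rightarrow> 'b::euclidean_space" and Q :: "'b \<Rightarrow> 'b \<Rightarrow> real"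
  assumes fin: "finite I" and c: "c > 0"
    and th: "norm \<theta> = 1"
    and q: "(\<Sum>b\<in>Basis. \<Sum>b'\<in>Basis. (\<theta> \<bullet> b) * (\<theta> \<bullet> b') * Q b b') \<ge> 2 * c"
    and T: "\<And>b b'. b \<in> Basis \<Longrightarrow> b' \<in> Basis \<Longrightarrow>
       \<bar>\<Sum>k\<in>I. (z k \<bullet> b) * (z k \<bullet> b') - Q b b'\<bar> < c * card I / (real DIM('b))\<^sup>2"
  shows "(\<Sum>k\<in>I. (\<theta> \<bullet> z k)\<^sup>2) \<ge> c * card I"
proof -
  define t where "t = c * card I / (real DIM('b))\<^sup>2"
  define TT where "TT b b' = (\<Sum>k\<in>I. (z k \<bullet> b) * (z k \<bullet> b') - Q b b')" for b b'
  have e: "(\<theta> \<bullet> z k)\<^sup>2 = (\<Sum>b\<in>Basis. \<Sum>b'\<in>Basis. (\<theta> \<bullet> b) * (\<theta> \<bullet> b') * ((z k \<bullet> b) * (z k \<bullet> b')))" for k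
  proof -
    have h: "\<theta> \<bullet> z k = (\<Sum>b\<in>Basis. (\<theta> \<bullet> b) * (z k \<bullet> b))" by (rule euclidean_inner)
    have "(\<theta> \<bullet> z k)\<^sup>2 = (\<Sum>b\<in>Basis. (\<theta> \<bullet> b) * (z k \<bullet> b)) * (\<Sum>b'\<in>Basis. (\<theta> \<bullet> b') * (z k \<bullet> b'))"
      unfolding power2_eq_square h ..
    also have "\<dots> = (\<Sum>b\<in>Basis. \<Sum>b'\<in>Basis. ((\<theta> \<bullet> b) * (z k \<bullet> b)) * ((\<theta> \<bullet> b') * (z k \<bullet> b')))"
      by (rule sum_product)
    also have "\<dots> = (\<Sum>b\<in>Basis. \<Sum>b'\<in>Basis. (\<theta> \<bullet> b) * (\<theta> \<bullet> b') * ((z k \<bullet> b) * (z k \<bullet> b')))"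
      by (simp only: mult_ac)
    finally show ?thesis .
  qed
  have "(\<Sum>k\<in>I. (\<theta> \<bullet> z k)\<^sup>2) = (\<Sum>b\<in>Basis. \<Sum>b'\<in>Basis. (\<theta> \<bullet> b) * (\<theta> \<bullet> b') * (\<Sum>k\<in>I. (z k \<bullet> b) * (z k \<bullet> b')))"
    unfolding e by (simp add: sum_distrib_left sum.swap[of _ I])
  also have "\<dots> = (\<Sum>b\<in>Basis. \<Sum>b'\<in>Basis. (\<theta> \<bullet> b) * (\<theta> \<bullet> b') * (card I * Q b b' + TT b b'))"
    by (simp add: TT_def sum_subtractf)
  also have "\<dots> = card I * (\<Sum>b\<in>Basis. \<Sum>b'\<in>Basis. (\<theta> \<bullet> b) * (\<theta> \<bullet> b') * Q b b')
      + (\<Sum>b\<in>Basis. \<Sum>b'\<in>Basis. (\<theta> \<bullet> b) * (\<theta> \<bullet> b') * TT b b')"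
    by (simp add: algebra_simps sum.distrib sum_distrib_left)
  finally have eq: "(\<Sum>k\<in>I. (\<theta> \<bullet> z k)\<^sup>2) = \<dots>" .
  have abs: "\<bar>\<Sum>b\<in>Basis. \<Sum>b'\<in>Basis. (\<theta> \<bullet> b) * (\<theta> \<bullet> b') * TT b b'\<bar> \<le> (\<Sum>b\<in>(Basis::'b set). \<Sum>b'\<in>(Basis::'b set). t)"
  proof -
    have "\<bar>\<Sum>b\<in>Basis. \<Sum>b'\<in>Basis. (\<theta> \<bullet> b) * (\<theta> \<bullet> b') * TT b b'\<bar> \<le> (\<Sum>b\<in>Basis. \<bar>\<Sum>b'\<in>Basis. (\<theta> \<bullet> b) * (\<theta> \<bullet> b') * TT b b'\<bar>)"
      by (rule sum_abs)
    also have "\<dots> \<le> (\<Sum>b\<in>Basis. \<Sum>b'\<in>Basis. \<bar>(\<theta> \<bullet> b) * (\<theta> \<bullet> b') * TT b b'\<bar>)"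
      by (intro sum_mono sum_abs)
    also have "\<dots> \<le> (\<Sum>b\<in>(Basis::'b set). \<Sum>b'\<in>(Basis::'b set). t)"
    proof (intro sum_mono)
      fix b b' :: 'b assume bb: "b \<in> Basis" "b' \<in> Basis"
      have "\<bar>\<theta> \<bullet> b\<bar> \<le> 1" using bb th Basis_le_norm[of b \<theta>] by (simp add: inner_commute)
      moreover have "\<bar>\<theta> \<bullet> b'\<bar> \<le> 1" using bb th Basis_le_norm[of b' \<theta>] by (simp add: inner_commute)
      ultimately have "\<bar>\<theta> \<bullet> b\<bar> * \<bar>\<theta> \<bullet> b'\<bar> \<le> 1 * 1" by (intro mult_mono) auto
      moreover have "\<bar>TT b b'\<bar> \<le> t" using T[OF bb] by (simp add: TT_def t_def)
      ultimately have "(\<bar>\<theta> \<bullet> b\<bar> * \<bar>\<theta> \<bullet> b'\<bar>) * \<bar>TT b b'\<bar> \<le> 1 * t"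
        by (intro mult_mono) auto
      then show "\<bar>(\<theta> \<bullet> b) * (\<theta> \<bullet> b') * TT b b'\<bar> \<le> t" by (simp add: abs_mult)
    qed
    finally show ?thesis .
  qed
  have "(\<Sum>b\<in>(Basis::'b set). \<Sum>b'\<in>(Basis::'b set). t) = c * card I"
    by (simp add: t_def power2_eq_square)
  moreover have "card I * (\<Sum>b\<in>Basis. \<Sum>b'\<in>Basis. (\<theta> \<bullet> b) * (\<theta> \<bullet> b') * Q b b') \<ge> card I * (2 * c)"
    using q by (intro mult_left_mono) auto
  ultimately have A: "- (\<Sum>b\<in>Basis. \<Sum>b'\<in>Basis. (\<theta> \<bullet> b) * (\<theta> \<bullet> b') * TT b b') \<le> c * card I"
    and B: "card I * (\<Sum>b\<in>Basis. \<Sum>b'\<in>Basis. (\<theta> \<bullet> b) * (\<theta> \<bullet> b') * Q b b') \<ge> card I * (2 * c)"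
    using abs by (auto simp: abs_le_iff)
  have "real (card I) * (2 * c) = 2 * (c * card I)" by simp
  then show ?thesis using eq A B by linarith
qed

lemma el_dom_DD: "el_dom X mu K n \<omega> = DD (\<lambda>i j. X i j \<omega> - mu) K n"
  by (simp add: el_dom_def DD_def)

lemma el_argmin_iff:
  assumes "n * K > 0"
  shows "el_argmin X mu K n \<omega> l \<longleftrightarrow> l \<in> DD (\<lambda>i j. X i j \<omega> - mu) K n \<and>
     (\<forall>l'\<in>DD (\<lambda>i j. X i j \<omega> - mu) K n. FF (\<lambda>i j. X i j \<omega> - mu) K n l' \<le> FF (\<lambda>i j. X i j \<omega> - mu) K n l)"
proof -
  have p: "real (n * K) > 0" using assms by simp
  have "el_obj X mu K n \<omega> l \<le> el_obj X mu K n \<omega> l' \<longleftrightarrow> FF (\<lambda>i j. X i j \<omega> - mu) K n l' \<le> FF (\<lambda>i j. X i j \<omega> - mu) K n l" for l l'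
    using p by (simp add: el_obj_def FF_def field_simps)
  then show ?thesis unfolding el_argmin_def el_dom_DD by auto
qed

lemma bad_bound:
  fixes M :: "'a measure" and X :: "nat \<Rightarrow> nat \<Rightarrow> 'a \<Rightarrow> 'b::euclidean_space"
    and mu0 :: 'b and beta :: real and K :: "nat \<Rightarrow> nat"
    and lamhat :: "nat \<Rightarrow> 'a \<Rightarrow> 'b" and C1 :: real
  assumes P: "prob_space M"
    and meas: "\<And>i j. X i j \<in> borel_measurable M"
    and indep: "prob_space.indep_vars M (\<lambda>_. borel) (\<lambda>(i, j). X i j) UNIV"
    and ident: "\<And>i j. distr M borel (X i j) = distr M borel (X 0 0)"
    and mean: "integrable M (X 0 0)" "integral\<^sup>L M (X 0 0) = mu0"
    and cov: "nonsingular_cov M (X 0 0) mu0"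
    and beta: "beta \<ge> 4"
    and moment: "integrable M (\<lambda>\<omega>. norm (X 0 0 \<omega>) powr beta)"
    and Kpos: "\<And>n. K n \<ge> 1"
    and Krate: "(\<lambda>n. real (K n)) \<in> O(\<lambda>n. real (n * K n) powr (1 - 2 / beta))"
    and lamhat: "\<And>n \<omega>. \<omega> \<in> space M \<Longrightarrow> (\<exists>l. el_argmin X mu0 (K n) n \<omega> l) \<Longrightarrow>
                  el_argmin X mu0 (K n) n \<omega> (lamhat n \<omega>)"
    and C1: "C1 > 0"
    and e: "e > 0" and del: "del > 0"
  shows "\<exists>B. (\<forall>n. B n \<in> sets M) \<and> eventually (\<lambda>n. {\<omega> \<in> space M. (SUP l\<in>cball (lamhat n \<omega>) (C1 / sqrt (real n)).
               Max {\<bar>l \<bullet> (X i j \<omega> - mu0)\<bar> | i j. i < K n \<and> j < n}) > e} \<subseteq> B n \<and> measure M (B n) \<le> del) sequentially"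
proof -
  interpret prob_space M by fact
  have z4: "integrable M (\<lambda>\<omega>. norm (X 0 0 \<omega> - mu0) ^ 4)" by (rule z4_integrable[OF P meas beta moment])
  obtain c where c: "c > 0" and qlow: "\<And>\<theta>. norm \<theta> = 1 \<Longrightarrow> (\<Sum>b\<in>Basis. \<Sum>b'\<in>Basis. (\<theta> \<bullet> b) * (\<theta> \<bullet> b') * QQ M (X 0 0) mu0 b b') \<ge> 2 * c"
    using quad_lower[OF P meas z4 cov] by blast
  define Q where "Q = QQ M (X 0 0) mu0"
  define d where "d = real DIM('b)"
  have d: "d \<ge> 1" unfolding d_def using DIM_positive[where 'a='b] by linarith
  define Vb where "Vb b = integral\<^sup>L M (\<lambda>\<omega>. ((X 0 0 \<omega> - mu0) \<bullet> b)\<^sup>2)" for b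
  define V where "V = (\<Sum>b\<in>Basis. Vb b)"
  have V0: "V \<ge> 0" unfolding V_def Vb_def by (intro sum_nonneg integral_nonneg_AE) auto
  define g where "g b b' x = ((x - mu0) \<bullet> b) * ((x - mu0) \<bullet> b') - Q b b'" for b b' x
  have gm[measurable]: "g b b' \<in> borel_measurable borel" for b b' unfolding g_def by measurable
  define W where "W = (\<Sum>b\<in>Basis. \<Sum>b'\<in>Basis. integral\<^sup>L M (\<lambda>\<omega>. (g b b' (X 0 0 \<omega>))\<^sup>2))"
  define a where "a = 1 + 18 * d\<^sup>2 * (V + 1) / (c\<^sup>2 * del)"
  have a1: "a \<ge> 1" unfolding a_def using V0 c del by (auto intro!: divide_nonneg_pos)
  have a0: "a > 0" using a1 by simp
  define eta where "eta = min e (1/2) / (a + C1)"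
  have eta: "eta > 0" unfolding eta_def using e a0 C1 by auto
  have aeta: "(a + C1) * eta \<le> e" "a * eta \<le> 1/2"
  proof -
    have "(a + C1) * eta = min e (1/2)" unfolding eta_def using a0 C1 by simp
    moreover have "a * eta \<le> (a + C1) * eta" using C1 eta by (intro mult_right_mono) auto
    ultimately show "(a + C1) * eta \<le> e" "a * eta \<le> 1/2" by auto
  qed
  define I where "I n = {..<K n} \<times> {..<n}" for n
  have finI: "finite (I n)" for n unfolding I_def by auto
  have cardI: "card (I n) = n * K n" for n unfolding I_def by (simp add: card_cartesian_product)
  define B1 where "B1 n = (\<Union>k\<in>I n. {\<omega>\<in>space M. eta * sqrt n < norm (X (fst k) (snd k) \<omega> - mu0)})" for n
  define t2 where "t2 n = a * c * sqrt (real (n * K n)) / (3 * d)" for n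
  define B2 where "B2 n = (\<Union>b\<in>Basis. {\<omega>\<in>space M. t2 n \<le> \<bar>\<Sum>k\<in>I n. (X (fst k) (snd k) \<omega> - mu0) \<bullet> b\<bar>})" for n
  define t3 where "t3 n = c * real (n * K n) / d\<^sup>2" for n
  define B3 where "B3 n = (\<Union>b\<in>Basis. \<Union>b'\<in>Basis. {\<omega>\<in>space M. t3 n \<le> \<bar>\<Sum>k\<in>I n. g b b' (X (fst k) (snd k) \<omega>)\<bar>})" for n
  define B where "B n = B1 n \<union> B2 n \<union> B3 n" for n
  have B1m: "B1 n \<in> sets M" for n
    unfolding B1_def by (intro sets.finite_UN finI) (use meas in measurable)
  have B2m: "B2 n \<in> sets M" for n
    unfolding B2_def by (intro sets.finite_UN finite_Basis) (use meas in measurable)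
  have B3m: "B3 n \<in> sets M" for n
    unfolding B3_def by (intro sets.finite_UN finite_Basis) (use meas in measurable)
  have Bm: "B n \<in> sets M" for n unfolding B_def using B1m B2m B3m by auto
  have int_b: "integrable M (\<lambda>\<omega>. ((X 0 0 \<omega> - mu0) \<bullet> b)\<^sup>2)" if b: "b \<in> Basis" for b
  proof (rule Bochner_Integration.integrable_bound[OF z2_int[OF P meas z4]])
    show "AE x in M. norm (((X 0 0 x - mu0) \<bullet> b)\<^sup>2) \<le> norm (norm (X 0 0 x - mu0) ^ 2)"
    proof (rule AE_I2)
      fix x
      have "\<bar>(X 0 0 x - mu0) \<bullet> b\<bar> \<le> norm (X 0 0 x - mu0)" using b by (simp add: Basis_le_norm)
      then have "\<bar>(X 0 0 x - mu0) \<bullet> b\<bar>\<^sup>2 \<le> (norm (X 0 0 x - mu0))\<^sup>2" by (intro power_mono) auto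
      then show "norm (((X 0 0 x - mu0) \<bullet> b)\<^sup>2) \<le> norm (norm (X 0 0 x - mu0) ^ 2)" by simp
    qed
  qed (use meas in measurable)
  have mean_b: "integral\<^sup>L M (\<lambda>\<omega>. (X 0 0 \<omega> - mu0) \<bullet> b) = 0" for b
  proof -
    have "integral\<^sup>L M (\<lambda>\<omega>. (X 0 0 \<omega> - mu0) \<bullet> b) = integral\<^sup>L M (\<lambda>\<omega>. X 0 0 \<omega> \<bullet> b - mu0 \<bullet> b)"
      by (simp add: inner_diff_left)
    also have "\<dots> = integral\<^sup>L M (\<lambda>\<omega>. X 0 0 \<omega> \<bullet> b) - mu0 \<bullet> b"
      using mean(1) by (subst Bochner_Integration.integral_diff) (auto simp: prob_space)
    also have "\<dots> = 0" using mean by simp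
    finally show ?thesis .
  qed
  have mB2: "measure M (B2 n) \<le> del / 2" if n: "n > 0" for n
  proof -
    have Npos: "real (n * K n) > 0" using n Kpos[of n] by simp
    have t2p: "t2 n > 0" unfolding t2_def using a0 c d Npos by auto
    have "measure M (B2 n) \<le> (\<Sum>b\<in>Basis. measure M {\<omega>\<in>space M. t2 n \<le> \<bar>\<Sum>k\<in>I n. (X (fst k) (snd k) \<omega> - mu0) \<bullet> b\<bar>})"
      unfolding B2_def by (rule measure_UNION_le) (use meas in auto)
    also have "\<dots> \<le> (\<Sum>b\<in>Basis. card (I n) * Vb b / (t2 n)\<^sup>2)"
    proof (rule sum_mono)
      fix b :: 'b assume b: "b \<in> Basis"
      show "measure M {\<omega>\<in>space M. t2 n \<le> \<bar>\<Sum>k\<in>I n. (X (fst k) (snd k) \<omega> - mu0) \<bullet> b\<bar>} \<le> card (I n) * Vb b / (t2 n)\<^sup>2"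
        using cheb_sum[where g="\<lambda>x. (x - mu0) \<bullet> b", OF P meas indep ident _ int_b[OF b] mean_b finI t2p]
        unfolding Vb_def by simp
    qed
    also have "\<dots> = (\<Sum>b\<in>Basis. 9 * d\<^sup>2 * Vb b / (a\<^sup>2 * c\<^sup>2))"
    proof (rule sum.cong[OF refl])
      fix b :: 'b
      have t2sq: "(t2 n)\<^sup>2 = a\<^sup>2 * c\<^sup>2 * real (n * K n) / (9 * d\<^sup>2)"
        unfolding t2_def using Npos by (simp add: power_divide power_mult_distrib)
      have "card (I n) * Vb b / (t2 n)\<^sup>2 = real (n * K n) * Vb b / (a\<^sup>2 * c\<^sup>2 * real (n * K n) / (9 * d\<^sup>2))"
        by (simp only: t2sq cardI)
      also have "\<dots> = 9 * d\<^sup>2 * Vb b / (a\<^sup>2 * c\<^sup>2)"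
        using Npos d a0 c n Kpos[of n] by (simp add: field_simps)
      finally show "card (I n) * Vb b / (t2 n)\<^sup>2 = 9 * d\<^sup>2 * Vb b / (a\<^sup>2 * c\<^sup>2)" .
    qed
    also have "\<dots> = 9 * d\<^sup>2 * V / (a\<^sup>2 * c\<^sup>2)"
      unfolding V_def by (simp add: sum_divide_distrib[symmetric] sum_distrib_left)
    also have "\<dots> \<le> 9 * d\<^sup>2 * (V + 1) / ((18 * d\<^sup>2 * (V + 1) / (c\<^sup>2 * del)) * c\<^sup>2)"
    proof (rule frac_le)
      show "0 \<le> 9 * d\<^sup>2 * (V + 1)" using V0 by simp
      show "9 * d\<^sup>2 * V \<le> 9 * d\<^sup>2 * (V + 1)" by (intro mult_left_mono) auto
      show "0 < 18 * d\<^sup>2 * (V + 1) / (c\<^sup>2 * del) * c\<^sup>2" using V0 d c del by simp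
      have "18 * d\<^sup>2 * (V + 1) / (c\<^sup>2 * del) \<le> a" unfolding a_def by simp
      also have "a \<le> a\<^sup>2" using a1 by (simp add: power2_eq_square)
      finally show "18 * d\<^sup>2 * (V + 1) / (c\<^sup>2 * del) * c\<^sup>2 \<le> a\<^sup>2 * c\<^sup>2"
        using c by (intro mult_right_mono) auto
    qed
    also have "\<dots> = del / 2"
    proof -
      have p1: "V + 1 > 0" using V0 by simp
      have p2: "d\<^sup>2 > 0" using d by simp
      have "(18 * d\<^sup>2 * (V + 1) / (c\<^sup>2 * del)) * c\<^sup>2 = 18 * d\<^sup>2 * (V + 1) / del"
      proof -
        have cne: "c\<^sup>2 \<noteq> 0" using c by simp
        show ?thesis using cne del by (simp add: divide_simps)
      qed
      moreover have "9 * d\<^sup>2 * (V + 1) / (18 * d\<^sup>2 * (V + 1) / del) = del / 2"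
      proof -
        define D where "D = 18 * d\<^sup>2 * (V + 1)"
        have Dp: "D > 0" unfolding D_def using p1 p2 by simp
        have e1: "9 * d\<^sup>2 * (V + 1) = D / 2" unfolding D_def by simp
        have e2: "18 * d\<^sup>2 * (V + 1) = D" unfolding D_def by simp
        have "(D / 2) / (D / del) = del / 2" using Dp del by (simp add: divide_simps)
        then show ?thesis by (simp only: e1 e2)
      qed
      ultimately show ?thesis by simp
    qed
    finally show ?thesis .
  qed
  have int_g: "integrable M (\<lambda>\<omega>. (g b b' (X 0 0 \<omega>))\<^sup>2)" if b: "b \<in> Basis" "b' \<in> Basis" for b b'
  proof -
    have e: "(g b b' (X 0 0 \<omega>))\<^sup>2 = (((X 0 0 \<omega> - mu0) \<bullet> b) * ((X 0 0 \<omega> - mu0) \<bullet> b'))\<^sup>2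
       - 2 * Q b b' * (((X 0 0 \<omega> - mu0) \<bullet> b) * ((X 0 0 \<omega> - mu0) \<bullet> b')) + (Q b b')\<^sup>2" for \<omega>
      unfolding g_def by (simp add: power2_diff)
    show ?thesis unfolding e
      using prodsq_int[OF P meas z4 b] prod_int[OF P meas z4 b] by auto
  qed
  have mean_g: "integral\<^sup>L M (\<lambda>\<omega>. g b b' (X 0 0 \<omega>)) = 0" if b: "b \<in> Basis" "b' \<in> Basis" for b b'
  proof -
    have "integral\<^sup>L M (\<lambda>\<omega>. g b b' (X 0 0 \<omega>)) = integral\<^sup>L M (\<lambda>\<omega>. ((X 0 0 \<omega> - mu0) \<bullet> b) * ((X 0 0 \<omega> - mu0) \<bullet> b')) - Q b b'"
      unfolding g_def using prod_int[OF P meas z4 b] by (subst Bochner_Integration.integral_diff) (auto simp: prob_space)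
    also have "\<dots> = 0" unfolding Q_def Submission.QQ_def[OF P meas z4] by simp
    finally show ?thesis .
  qed
  have W0: "W \<ge> 0" unfolding W_def by (intro sum_nonneg integral_nonneg_AE) auto
  have mB3n: "measure M (B3 n) \<le> d ^ 4 * W / c\<^sup>2 / real n" if n: "n > 0" for n
  proof -
    have Npos: "real (n * K n) > 0" using n Kpos[of n] by simp
    have t3p: "t3 n > 0" unfolding t3_def using c d Npos by auto
    have "measure M (B3 n) \<le> (\<Sum>b\<in>Basis. measure M (\<Union>b'\<in>Basis. {\<omega>\<in>space M. t3 n \<le> \<bar>\<Sum>k\<in>I n. g b b' (X (fst k) (snd k) \<omega>)\<bar>}))"
      unfolding B3_def by (rule measure_UNION_le) (use meas in auto)
    also have "\<dots> \<le> (\<Sum>b\<in>Basis. \<Sum>b'\<in>Basis. measure M {\<omega>\<in>space M. t3 n \<le> \<bar>\<Sum>k\<in>I n. g b b' (X (fst k) (snd k) \<omega>)\<bar>})"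
      by (intro sum_mono measure_UNION_le) (use meas in auto)
    also have "\<dots> \<le> (\<Sum>b\<in>Basis. \<Sum>b'\<in>Basis. card (I n) * integral\<^sup>L M (\<lambda>\<omega>. (g b b' (X 0 0 \<omega>))\<^sup>2) / (t3 n)\<^sup>2)"
    proof (intro sum_mono)
      fix b b' :: 'b assume b: "b \<in> Basis" "b' \<in> Basis"
      show "measure M {\<omega>\<in>space M. t3 n \<le> \<bar>\<Sum>k\<in>I n. g b b' (X (fst k) (snd k) \<omega>)\<bar>} \<le> card (I n) * integral\<^sup>L M (\<lambda>\<omega>. (g b b' (X 0 0 \<omega>))\<^sup>2) / (t3 n)\<^sup>2"
        by (rule cheb_sum[where g="g b b'", OF P meas indep ident gm int_g[OF b] mean_g[OF b] finI t3p])
    qed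
    also have "\<dots> = (\<Sum>b\<in>Basis. \<Sum>b'\<in>Basis. integral\<^sup>L M (\<lambda>\<omega>. (g b b' (X 0 0 \<omega>))\<^sup>2) * (d ^ 4 / (c\<^sup>2 * real (n * K n))))"
    proof (intro sum.cong refl)
      fix b b' :: 'b
      have t3sq: "(t3 n)\<^sup>2 = c\<^sup>2 * (real (n * K n))\<^sup>2 / d ^ 4"
        unfolding t3_def by (simp add: power_divide power_mult_distrib)
      have "card (I n) * integral\<^sup>L M (\<lambda>\<omega>. (g b b' (X 0 0 \<omega>))\<^sup>2) / (t3 n)\<^sup>2
          = real (n * K n) * integral\<^sup>L M (\<lambda>\<omega>. (g b b' (X 0 0 \<omega>))\<^sup>2) / (c\<^sup>2 * (real (n * K n))\<^sup>2 / d ^ 4)"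
        by (simp only: t3sq cardI)
      also have "\<dots> = integral\<^sup>L M (\<lambda>\<omega>. (g b b' (X 0 0 \<omega>))\<^sup>2) * (d ^ 4 / (c\<^sup>2 * real (n * K n)))"
        using Npos c d by (simp add: divide_simps power2_eq_square)
      finally show "card (I n) * integral\<^sup>L M (\<lambda>\<omega>. (g b b' (X 0 0 \<omega>))\<^sup>2) / (t3 n)\<^sup>2
          = integral\<^sup>L M (\<lambda>\<omega>. (g b b' (X 0 0 \<omega>))\<^sup>2) * (d ^ 4 / (c\<^sup>2 * real (n * K n)))" .
    qed
    also have "\<dots> = W * (d ^ 4 / (c\<^sup>2 * real (n * K n)))"
      unfolding W_def by (simp only: sum_distrib_right)
    also have "\<dots> \<le> W * (d ^ 4 / (c\<^sup>2 * real n))"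
    proof (rule mult_left_mono[OF _ W0])
      have "real n * 1 \<le> real n * real (K n)" using Kpos[of n] by (intro mult_left_mono) auto
      then have le: "c\<^sup>2 * real n \<le> c\<^sup>2 * real (n * K n)" using c by (intro mult_left_mono) auto
      have d4: "0 \<le> d ^ 4" using d by simp
      have pos: "0 < c\<^sup>2 * real n" using c n by simp
      show "d ^ 4 / (c\<^sup>2 * real (n * K n)) \<le> d ^ 4 / (c\<^sup>2 * real n)"
        by (rule divide_left_mono[OF le d4]) (use pos le in simp)
    qed
    also have "\<dots> = d ^ 4 * W / c\<^sup>2 / real n" by simp
    finally show ?thesis .
  qed
  have mB3: "eventually (\<lambda>n. measure M (B3 n) \<le> del / 4) sequentially"
  proof -
    have "(\<lambda>n. d ^ 4 * W / c\<^sup>2 / real n) \<longlonglongrightarrow> 0" by (rule lim_const_over_n)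
    then have "eventually (\<lambda>n. d ^ 4 * W / c\<^sup>2 / real n < del / 4) sequentially"
      using del by (intro order_tendstoD(2)) auto
    then show ?thesis using eventually_gt_at_top[of 0]
    proof eventually_elim
      case (elim n)
      have "measure M (B3 n) \<le> d ^ 4 * W / c\<^sup>2 / real n" by (rule mB3n) (use elim in simp)
      then show ?case using elim(1) by linarith
    qed
  qed
  have mB1: "eventually (\<lambda>n. measure M (B1 n) \<le> del / 4) sequentially"
  proof -
    obtain CK where CK: "eventually (\<lambda>n. real (n * K n) \<le> CK * real n powr (beta / 2)) sequentially"
      using Krate_bound[OF _ Kpos Krate] beta by force
    have "(\<lambda>n. measure M (B1 n)) \<longlonglongrightarrow> 0"
      unfolding B1_def I_def
      by (rule max_tail[where M=M and X=X, OF P meas ident moment _ eta CK]) (use beta in simp)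
    then have "eventually (\<lambda>n. measure M (B1 n) < del / 4) sequentially"
      using del by (intro order_tendstoD(2)) auto
    then show ?thesis by eventually_elim simp
  qed
  have sub: "{\<omega> \<in> space M. (SUP l\<in>cball (lamhat n \<omega>) (C1 / sqrt (real n)).
               Max {\<bar>l \<bullet> (X i j \<omega> - mu0)\<bar> | i j. i < K n \<and> j < n}) > e} \<subseteq> B n" if n: "n > 0" for n
  proof (rule subsetI, rule ccontr)
    fix \<omega> assume om: "\<omega> \<in> {\<omega> \<in> space M. (SUP l\<in>cball (lamhat n \<omega>) (C1 / sqrt (real n)).
               Max {\<bar>l \<bullet> (X i j \<omega> - mu0)\<bar> | i j. i < K n \<and> j < n}) > e}"
      and nB: "\<omega> \<notin> B n"
    have oms: "\<omega> \<in> space M" using om by simp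
    have Kn: "K n \<ge> 1" by (rule Kpos)
    have Npos: "n * K n > 0" using n Kn by simp
    define z where "z i j = X i j \<omega> - mu0" for i j
    have zb: "norm (z i j) \<le> eta * sqrt n" if ij: "i < K n" "j < n" for i j
    proof (rule ccontr)
      assume "\<not> ?thesis"
      then have "\<omega> \<in> B1 n" unfolding B1_def I_def z_def using ij oms
        by (intro UN_I[of "(i, j)"]) auto
      then show False using nB unfolding B_def by blast
    qed
    have sqN: "sqrt (real (n * K n)) > 0" using Npos by simp
    have meanz: "norm (\<Sum>i<K n. \<Sum>j<n. z i j) < (a / sqrt (real (n * K n))) * c * real (n * K n) / 3"
    proof -
      have cb: "\<bar>(\<Sum>i<K n. \<Sum>j<n. z i j) \<bullet> b\<bar> < t2 n" if b: "b \<in> Basis" for b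
      proof -
        have "(\<Sum>i<K n. \<Sum>j<n. z i j) \<bullet> b = (\<Sum>i<K n. \<Sum>j<n. z i j \<bullet> b)"
          by (simp add: inner_sum_left)
        also have "\<dots> = (\<Sum>k\<in>I n. (X (fst k) (snd k) \<omega> - mu0) \<bullet> b)"
          unfolding I_def z_def by (rule dsum)
        finally have eq: "(\<Sum>i<K n. \<Sum>j<n. z i j) \<bullet> b = (\<Sum>k\<in>I n. (X (fst k) (snd k) \<omega> - mu0) \<bullet> b)" .
        show ?thesis
        proof (rule ccontr)
          assume "\<not> ?thesis"
          then have "t2 n \<le> \<bar>\<Sum>k\<in>I n. (X (fst k) (snd k) \<omega> - mu0) \<bullet> b\<bar>" unfolding eq by simp
          then have "\<omega> \<in> B2 n" unfolding B2_def using b oms by blast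
          then show False using nB unfolding B_def by blast
        qed
      qed
      have "norm (\<Sum>i<K n. \<Sum>j<n. z i j) \<le> (\<Sum>b\<in>Basis. \<bar>(\<Sum>i<K n. \<Sum>j<n. z i j) \<bullet> b\<bar>)"
        by (rule norm_le_l1)
      also have "\<dots> < (\<Sum>b\<in>(Basis::'b set). t2 n)"
        by (rule sum_strict_mono) (use cb in auto)
      also have "\<dots> = d * t2 n" by (simp add: d_def)
      also have "\<dots> = a * c * sqrt (real (n * K n)) / 3" unfolding t2_def using d by simp
      also have "\<dots> = (a / sqrt (real (n * K n))) * c * real (n * K n) / 3"
      proof -
        have r: "real (n * K n) / sqrt (real (n * K n)) = sqrt (real (n * K n))" by (rule real_div_sqrt) simp
        have "(a / sqrt (real (n * K n))) * c * real (n * K n) / 3 = a * c * (real (n * K n) / sqrt (real (n * K n))) / 3"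
          using sqN by (simp add: field_simps)
        then show ?thesis unfolding r by simp
      qed
      finally show ?thesis .
    qed
    have quadz: "(\<Sum>i<K n. \<Sum>j<n. (\<theta> \<bullet> z i j)\<^sup>2) \<ge> c * real (n * K n)" if th: "norm \<theta> = 1" for \<theta>
    proof -
      have eq: "(\<Sum>i<K n. \<Sum>j<n. (\<theta> \<bullet> z i j)\<^sup>2) = (\<Sum>k\<in>I n. (\<theta> \<bullet> (X (fst k) (snd k) \<omega> - mu0))\<^sup>2)"
        unfolding I_def z_def by (rule dsum)
      have T: "\<bar>\<Sum>k\<in>I n. ((X (fst k) (snd k) \<omega> - mu0) \<bullet> b) * ((X (fst k) (snd k) \<omega> - mu0) \<bullet> b') - Q b b'\<bar>
          < c * card (I n) / (real DIM('b))\<^sup>2" if b: "b \<in> Basis" "b' \<in> Basis" for b b'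
      proof (rule ccontr)
        assume "\<not> ?thesis"
        then have "t3 n \<le> \<bar>\<Sum>k\<in>I n. g b b' (X (fst k) (snd k) \<omega>)\<bar>"
          unfolding t3_def g_def d_def cardI by simp
        then have "\<omega> \<in> B3 n" unfolding B3_def using b oms by blast
        then show False using nB unfolding B_def by blast
      qed
      have "(\<Sum>k\<in>I n. (\<theta> \<bullet> (X (fst k) (snd k) \<omega> - mu0))\<^sup>2) \<ge> c * card (I n)"
        by (rule quad_det[OF finI c th _ T]) (use qlow[OF th] in \<open>simp add: Q_def\<close>)
      then show ?thesis using eq cardI by simp
    qed
    have lh: "lamhat n \<omega> \<in> DD z (K n) n \<and> (\<forall>l'\<in>DD z (K n) n. FF z (K n) n l' \<le> FF z (K n) n (lamhat n \<omega>))"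
      if ex: "\<exists>l\<in>DD z (K n) n. \<forall>l'\<in>DD z (K n) n. FF z (K n) n l' \<le> FF z (K n) n l"
    proof -
      have "\<exists>l. el_argmin X mu0 (K n) n \<omega> l"
        using ex el_argmin_iff[OF Npos, of X mu0 \<omega>] unfolding z_def by blast
      then have "el_argmin X mu0 (K n) n \<omega> (lamhat n \<omega>)" by (rule lamhat[OF oms])
      then show ?thesis using el_argmin_iff[OF Npos, of X mu0 \<omega>] unfolding z_def by blast
    qed
    have bnd: "\<bar>l \<bullet> (X i j \<omega> - mu0)\<bar> \<le> e"
      if l: "l \<in> cball (lamhat n \<omega>) (C1 / sqrt n)" and ij: "i < K n" "j < n" for l i j
      using det_bound[OF n Kn c a0 C1 eta aeta zb meanz quadz lh l ij] unfolding z_def .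
    have "(SUP l\<in>cball (lamhat n \<omega>) (C1 / sqrt (real n)).
               Max {\<bar>l \<bullet> (X i j \<omega> - mu0)\<bar> | i j. i < K n \<and> j < n}) \<le> e"
    proof (rule cSUP_least)
      show "cball (lamhat n \<omega>) (C1 / sqrt (real n)) \<noteq> {}" using C1 by (simp add: not_less)
      fix l assume l: "l \<in> cball (lamhat n \<omega>) (C1 / sqrt (real n))"
      have seq: "{\<bar>l \<bullet> (X i j \<omega> - mu0)\<bar> | i j. i < K n \<and> j < n} = (\<lambda>(i, j). \<bar>l \<bullet> (X i j \<omega> - mu0)\<bar>) ` ({..<K n} \<times> {..<n})"
        by auto
      show "Max {\<bar>l \<bullet> (X i j \<omega> - mu0)\<bar> | i j. i < K n \<and> j < n} \<le> e"
        unfolding seq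
      proof (rule Max.boundedI)
        show "finite ((\<lambda>(i, j). \<bar>l \<bullet> (X i j \<omega> - mu0)\<bar>) ` ({..<K n} \<times> {..<n}))" by auto
        show "(\<lambda>(i, j). \<bar>l \<bullet> (X i j \<omega> - mu0)\<bar>) ` ({..<K n} \<times> {..<n}) \<noteq> {}"
        proof -
          have "(0, 0) \<in> {..<K n} \<times> {..<n}" using n Kn by simp
          then show ?thesis by blast
        qed
        fix x assume "x \<in> (\<lambda>(i, j). \<bar>l \<bullet> (X i j \<omega> - mu0)\<bar>) ` ({..<K n} \<times> {..<n})"
        then obtain i j where "i < K n" "j < n" "x = \<bar>l \<bullet> (X i j \<omega> - mu0)\<bar>" by auto
        then show "x \<le> e" using bnd[OF l] by simp
      qed
    qed
    then show False using om by simp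
  qed
  have "eventually (\<lambda>n. {\<omega> \<in> space M. (SUP l\<in>cball (lamhat n \<omega>) (C1 / sqrt (real n)).
               Max {\<bar>l \<bullet> (X i j \<omega> - mu0)\<bar> | i j. i < K n \<and> j < n}) > e} \<subseteq> B n \<and> measure M (B n) \<le> del) sequentially"
    using mB1 mB3 eventually_gt_at_top[of 0]
  proof eventually_elim
    case (elim n)
    have "measure M (B n) \<le> measure M (B1 n \<union> B2 n) + measure M (B3 n)"
      unfolding B_def by (rule measure_Un_le) (use B1m B2m B3m in auto)
    also have "measure M (B1 n \<union> B2 n) \<le> measure M (B1 n) + measure M (B2 n)"
      by (rule measure_Un_le) (use B1m B2m in auto)
    finally have "measure M (B n) \<le> measure M (B1 n) + measure M (B2 n) + measure M (B3 n)" by simp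
    then have "measure M (B n) \<le> del" using elim mB2[OF elim(3)] by linarith
    then show ?case using sub[OF elim(3)] by blast
  qed
  then show ?thesis using Bm by blast
qed

theorem lemmaA3:
  fixes M :: "'a measure" and X :: "nat \<Rightarrow> nat \<Rightarrow> 'a \<Rightarrow> 'b::euclidean_space"
    and mu0 :: 'b and beta :: real and K :: "nat \<Rightarrow> nat"
    and lamhat :: "nat \<Rightarrow> 'a \<Rightarrow> 'b" and C1 :: real
  assumes "prob_space M"
    and meas: "\<And>i j. X i j \<in> borel_measurable M"
    and indep: "prob_space.indep_vars M (\<lambda>_. borel) (\<lambda>(i, j). X i j) UNIV"
    and ident: "\<And>i j. distr M borel (X i j) = distr M borel (X 0 0)"
    and mean: "integrable M (X 0 0)" "integral\<^sup>L M (X 0 0) = mu0"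
    and cov: "nonsingular_cov M (X 0 0) mu0"
    and beta: "beta \<ge> 4"
    and moment: "integrable M (\<lambda>\<omega>. norm (X 0 0 \<omega>) powr beta)"
    and Kpos: "\<And>n. K n \<ge> 1"
    and Krate: "(\<lambda>n. real (K n)) \<in> O(\<lambda>n. real (n * K n) powr (1 - 2 / beta))"
    and lamhat: "\<And>n \<omega>. \<omega> \<in> space M \<Longrightarrow> (\<exists>l. el_argmin X mu0 (K n) n \<omega> l) \<Longrightarrow>
                  el_argmin X mu0 (K n) n \<omega> (lamhat n \<omega>)"
    and C1: "C1 > 0"
  shows "\<forall>e>0. \<exists>A. (\<forall>n. A n \<in> sets M \<and>
           {\<omega> \<in> space M. (SUP l\<in>cball (lamhat n \<omega>) (C1 / sqrt (real n)).
               Max {\<bar>l \<bullet> (X i j \<omega> - mu0)\<bar> | i j. i < K n \<and> j < n}) > e} \<subseteq> A n)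
         \<and> (\<lambda>n. measure M (A n)) \<longlonglongrightarrow> 0"
proof (intro allI impI)
  fix e :: real assume e: "e > 0"
  note P = \<open>prob_space M\<close>
  interpret prob_space M by (rule P)
  define S where "S n = {\<omega> \<in> space M. (SUP l\<in>cball (lamhat n \<omega>) (C1 / sqrt (real n)).
               Max {\<bar>l \<bullet> (X i j \<omega> - mu0)\<bar> | i j. i < K n \<and> j < n}) > e}" for n
  have "\<forall>n. \<exists>A. A \<in> sets M \<and> S n \<subseteq> A \<and> (\<forall>B\<in>sets M. S n \<subseteq> B \<longrightarrow> measure M A \<le> measure M B)"
  proof
    fix n
    have "S n \<subseteq> space M" unfolding S_def by auto
    from meas_hull[OF P this] show "\<exists>A. A \<in> sets M \<and> S n \<subseteq> A \<and> (\<forall>B\<in>sets M. S n \<subseteq> B \<longrightarrow> measure M A \<le> measure M B)"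
      by blast
  qed
  then obtain H where H: "\<And>n. H n \<in> sets M" "\<And>n. S n \<subseteq> H n"
    "\<And>n B. B \<in> sets M \<Longrightarrow> S n \<subseteq> B \<Longrightarrow> measure M (H n) \<le> measure M B"
    by metis
  have lim: "(\<lambda>n. measure M (H n)) \<longlonglongrightarrow> 0"
  proof (rule order_tendstoI)
    fix y :: real assume "y < 0"
    then show "eventually (\<lambda>n. y < measure M (H n)) sequentially"
      by (intro always_eventually allI) (simp add: less_le_trans[OF _ measure_nonneg])
  next
    fix y :: real assume y: "0 < y"
    then have "y / 2 > 0" by simp
    from bad_bound[OF P meas indep ident mean cov beta moment Kpos Krate lamhat C1 e this]
    obtain B where Bm: "\<forall>n. B n \<in> sets M"
      and ev: "eventually (\<lambda>n. S n \<subseteq> B n \<and> measure M (B n) \<le> y / 2) sequentially"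
      unfolding S_def by blast
    show "eventually (\<lambda>n. measure M (H n) < y) sequentially"
      using ev
    proof eventually_elim
      case (elim n)
      have "measure M (H n) \<le> measure M (B n)" using H(3)[of "B n" n] Bm elim by blast
      then show ?case using elim y by linarith
    qed
  qed
  show "\<exists>A. (\<forall>n. A n \<in> sets M \<and> {\<omega> \<in> space M. (SUP l\<in>cball (lamhat n \<omega>) (C1 / sqrt (real n)).
               Max {\<bar>l \<bullet> (X i j \<omega> - mu0)\<bar> | i j. i < K n \<and> j < n}) > e} \<subseteq> A n)
         \<and> (\<lambda>n. measure M (A n)) \<longlonglongrightarrow> 0"
    using H(1,2) lim unfolding S_def by blast
qed

end
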